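(* Let $n_1,n_2,n_3\ge 2$, $r\le\min\{n_1,n_2\}$, $b,c,\sigma>0$, and $\mathcal{X}^*=\mathcal{A}^*\diamond\mathcal{B}^*$ with $\mathcal{A}^*\in\mathbb{R}_+^{n_1\times r\times n_3}$, $\mathcal{B}^*\in\mathbb{R}_+^{r\times n_2\times n_3}$, $0\le\mathcal{X}^*_{ijk}\le c/2$, $0\le\mathcal{A}^*_{ijk}\le1$, $0\le\mathcal{B}^*_{ijk}\le b$. Let $4\le m\le n_1n_2n_3$, $\Omega\sim\mathrm{Bern}(\frac{m}{n_1n_2n_3})$, and $\mathcal{Y}_{ijk}=\mathcal{X}^*_{ijk}+\sigma\epsilon_{ijk}$ for $(i,j,k)\in\Omega$, with $\epsilon_{ijk}$ i.i.d. $N(0,1)$ (so $p_x$ is the $N(x,\sigma^2)$ density). Let $\beta=\max\left\{3,1+\frac{\log(3rn_3^{1.5}b/c)}{\log(n_1\vee n_2)}\right\}$, $\kappa=\frac{c^2}{2\sigma^2}$ and $\lambda=4(\beta+2)\left(1+\frac{2\kappa}{3}\right)\log(n_1\vee n_2)$. Then the estimator $\widetilde{\mathcal{X}}^\lambda$ satisfies \[ \frac{\mathbb{E}_{\Omega,\mathcal{Y}_\Omega}\|\widetilde{\mathcal{X}}^\lambda-\mathcal{X}^*\|_F^2}{n_1n_2n_3}\le\frac{22c^2\log(m)}{m}+16(3\sigma^2+2c^2)(\beta+2)\left(\frac{rn_1n_3+\|\mathcal{B}^*\|_0}{m}\right)\log(n_1\vee n_2). \]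
   Context: Tensor-tensor product $\diamond$: for $\mathcal{X}\in\mathbb{R}^{n_1\times n_2\times n_3}$ with frontal slices $\mathbf{X}^{(1)},\dots,\mathbf{X}^{(n_3)}$ and $\mathcal{Y}\in\mathbb{R}^{n_2\times n_4\times n_3}$, $\mathcal{X}\diamond\mathcal{Y}$ is obtained by multiplying the block-circulant matrix with $(p,q)$ block $\mathbf{X}^{((p-q)\bmod n_3+1)}$ by the vertical stack of the frontal slices of $\mathcal{Y}$ and folding back. $\|\cdot\|_0$ counts nonzero entries, $\|\cdot\|_F$ is the Frobenius norm, $m\vee n=\max\{m,n\}$. $\Omega\sim\mathrm{Bern}(\gamma)$: each index included independently with probability $\gamma$. With $\vartheta=2^{\lceil\beta\log_2(n_1\vee n_2)\rceil}$, $\mathfrak{L}$ = tensors in $\mathbb{R}_+^{n_1\times r\times n_3}$ with entries among $\vartheta$ uniformly spaced levels of $[0,1]$; $\mathfrak{D}$ = tensors in $\mathbb{R}_+^{r\times n_2\times n_3}$ with entries $0$ or among $\vartheta$ uniformly spaced levels of $[0,b]$; $\Gamma=\{\mathcal{A}\diamond\mathcal{B}:\mathcal{A}\in\mathfrak{L},\mathcal{B}\in\mathfrak{D},0\le(\mathcal{A}\diamond\mathcal{B})_{ijk}\le c\}$. Estimator: $\widetilde{\mathcal{X}}^\lambda\in\arg\min_{\mathcal{X}=\mathcal{A}\diamond\mathcal{B}\in\Gamma}\{-\log p_{\mathcal{X}_\Omega}(\mathcal{Y}_\Omega)+\lambda\|\mathcal{B}\|_0\}$ with $p_{\mathcal{X}_\Omega}(\mathcal{Y}_\Omega)=\prod_{(i,j,k)\in\Omega}p_{\mathcal{X}_{ijk}}(\mathcal{Y}_{ijk})$.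 *)

theory Defs
  imports "HOL-Probability.Probability"
begin

type_synonym tensor = "nat \<Rightarrow> nat \<Rightarrow> nat \<Rightarrow> real"
type_synonym idx = "nat \<times> nat \<times> nat"

text \<open>Tensors are functions on 0-based indices; only entries with indices in range matter.
  Tensor-tensor product (t-product): output frontal slice k is
  sum over q of A^((k-q) mod n3) times B^(q).\<close>
definition tprod :: "nat \<Rightarrow> nat \<Rightarrow> tensor \<Rightarrow> tensor \<Rightarrow> tensor" where
  "tprod r n3 A B = (\<lambda>i j k. \<Sum>q<n3. \<Sum>l<r. A i l ((k + n3 - q) mod n3) * B l j q)"

definition index_set :: "nat \<Rightarrow> nat \<Rightarrow> nat \<Rightarrow> idx set" where
  "index_set n1 n2 n3 = {..<n1} \<times> {..<n2} \<times> {..<n3}"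

definition frob_sq :: "nat \<Rightarrow> nat \<Rightarrow> nat \<Rightarrow> tensor \<Rightarrow> real" where
  "frob_sq n1 n2 n3 X = (\<Sum>i<n1. \<Sum>j<n2. \<Sum>k<n3. (X i j k)\<^sup>2)"

definition l0norm :: "nat \<Rightarrow> nat \<Rightarrow> nat \<Rightarrow> tensor \<Rightarrow> nat" where
  "l0norm r n2 n3 B = card {(l, j, k). l < r \<and> j < n2 \<and> k < n3 \<and> B l j k \<noteq> 0}"

definition levels :: "real \<Rightarrow> real \<Rightarrow> nat \<Rightarrow> real set" where
  "levels lo hi \<theta> = {lo + real t * (hi - lo) / (real \<theta> - 1) | t. t < \<theta>}"

definition quant_levels :: "real \<Rightarrow> nat \<Rightarrow> nat \<Rightarrow> nat" where
  "quant_levels \<beta> n1 n2 = 2 ^ nat \<lceil>\<beta> * log 2 (real (max n1 n2))\<rceil>"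

definition LSet :: "nat \<Rightarrow> nat \<Rightarrow> nat \<Rightarrow> nat \<Rightarrow> tensor set" where
  "LSet n1 r n3 \<theta> = {A. \<forall>i<n1. \<forall>l<r. \<forall>k<n3. A i l k \<in> levels 0 1 \<theta>}"

definition DSet :: "nat \<Rightarrow> nat \<Rightarrow> nat \<Rightarrow> nat \<Rightarrow> real \<Rightarrow> tensor set" where
  "DSet r n2 n3 \<theta> b = {B. \<forall>l<r. \<forall>j<n2. \<forall>k<n3. B l j k = 0 \<or> B l j k \<in> levels 0 b \<theta>}"

definition feasible :: "nat \<Rightarrow> nat \<Rightarrow> nat \<Rightarrow> nat \<Rightarrow> nat \<Rightarrow> real \<Rightarrow> real \<Rightarrow> tensor \<Rightarrow> tensor \<Rightarrow> bool" where
  "feasible n1 n2 n3 r \<theta> b c A B \<longleftrightarrow> A \<in> LSet n1 r n3 \<theta> \<and> B \<in> DSet r n2 n3 \<theta> b \<and>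
     (\<forall>i<n1. \<forall>j<n2. \<forall>k<n3. 0 \<le> tprod r n3 A B i j k \<and> tprod r n3 A B i j k \<le> c)"

definition neg_loglik :: "real \<Rightarrow> idx set \<Rightarrow> tensor \<Rightarrow> (idx \<Rightarrow> real) \<Rightarrow> real" where
  "neg_loglik \<sigma> \<Omega> X Y = (\<Sum>(i, j, k)\<in>\<Omega>. - ln (normal_density (X i j k) \<sigma> (Y (i, j, k))))"

definition objective :: "nat \<Rightarrow> nat \<Rightarrow> nat \<Rightarrow> real \<Rightarrow> real \<Rightarrow> idx set \<Rightarrow> (idx \<Rightarrow> real) \<Rightarrow> tensor \<Rightarrow> tensor \<Rightarrow> real" where
  "objective r n2 n3 \<sigma> lam \<Omega> Y A B = neg_loglik \<sigma> \<Omega> (tprod r n3 A B) Y + lam * real (l0norm r n2 n3 B)"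

definition is_pml_estimator ::
  "nat \<Rightarrow> nat \<Rightarrow> nat \<Rightarrow> nat \<Rightarrow> nat \<Rightarrow> real \<Rightarrow> real \<Rightarrow> real \<Rightarrow> real \<Rightarrow>
   (idx set \<Rightarrow> (idx \<Rightarrow> real) \<Rightarrow> tensor) \<Rightarrow> bool" where
  "is_pml_estimator n1 n2 n3 r \<theta> b c \<sigma> lam est \<longleftrightarrow>
     (\<forall>\<Omega> Y. \<Omega> \<subseteq> index_set n1 n2 n3 \<longrightarrow>
        (\<exists>A B. feasible n1 n2 n3 r \<theta> b c A B \<and> est \<Omega> Y = tprod r n3 A B \<and>
           (\<forall>A' B'. feasible n1 n2 n3 r \<theta> b c A' B' \<longrightarrow>
              objective r n2 n3 \<sigma> lam \<Omega> Y A B \<le> objective r n2 n3 \<sigma> lam \<Omega> Y A' B')))"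

text \<open>Sample space: for each index an independent pair (membership in Omega ~ Bern(gamma),
  standard normal noise eps).\<close>
definition sample_space :: "nat \<Rightarrow> nat \<Rightarrow> nat \<Rightarrow> real \<Rightarrow> (idx \<Rightarrow> bool \<times> real) measure" where
  "sample_space n1 n2 n3 \<gamma> = PiM (index_set n1 n2 n3)
     (\<lambda>_. pair_measure (measure_pmf (bernoulli_pmf \<gamma>)) (density lborel std_normal_density))"

definition Omega_of :: "nat \<Rightarrow> nat \<Rightarrow> nat \<Rightarrow> (idx \<Rightarrow> bool \<times> real) \<Rightarrow> idx set" where
  "Omega_of n1 n2 n3 \<omega> = {t \<in> index_set n1 n2 n3. fst (\<omega> t)}"

text \<open>Observed data Y_Omega (set to 0 outside Omega, where it is not observed).\<close>
definition Y_of :: "nat \<Rightarrow> nat \<Rightarrow> nat \<Rightarrow> real \<Rightarrow> tensor \<Rightarrow> (idx \<Rightarrow> bool \<times> real) \<Rightarrow> idx \<Rightarrow> real" where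
  "Y_of n1 n2 n3 \<sigma> Xs \<omega> = (\<lambda>(i, j, k). if (i, j, k) \<in> Omega_of n1 n2 n3 \<omega>
       then Xs i j k + \<sigma> * snd (\<omega> (i, j, k)) else 0)"

end

theory Submission
  imports Defs
begin

abbreviation M0 :: "real \<Rightarrow> (bool \<times> real) measure" where
  "M0 \<gamma> \<equiv> pair_measure (measure_pmf (bernoulli_pmf \<gamma>)) (density lborel std_normal_density)"

lemma prob_M0: "prob_space (M0 \<gamma>)"
  by (intro prob_space_pair prob_space_normal_density prob_space_measure_pmf) simp

lemma meas_M0_if[measurable]:
  "(\<lambda>z::bool\<times>real. ennreal (if fst z then exp (\<alpha> + \<beta> * snd z) else 1)) \<in> borel_measurable (M0 \<gamma>)"
  by measurable

lemma meas_M0_if2[measurable]: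
  "(\<lambda>z::bool\<times>real. ennreal (if fst z then x else 0)) \<in> borel_measurable (M0 \<gamma>)"
  by measurable

lemma normal_mgf:
  "(\<integral>\<^sup>+ y. ennreal (exp (\<alpha> + \<beta> * y)) \<partial>density lborel std_normal_density) = ennreal (exp (\<alpha> + \<beta>\<^sup>2 / 2))"
proof -
  have eq: "std_normal_density y * exp (\<alpha> + \<beta> * y) = exp (\<alpha> + \<beta>\<^sup>2 / 2) * normal_density \<beta> 1 y" for y
    unfolding normal_density_def by (simp add: mult_exp_exp power2_eq_square field_simps)
  have "(\<integral>\<^sup>+ y. ennreal (exp (\<alpha> + \<beta> * y)) \<partial>density lborel std_normal_density)
      = (\<integral>\<^sup>+ y. ennreal (std_normal_density y) * ennreal (exp (\<alpha> + \<beta> * y)) \<partial>lborel)"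
    by (subst nn_integral_density) (auto simp: normal_density_nonneg)
  also have "\<dots> = (\<integral>\<^sup>+ y. ennreal (exp (\<alpha> + \<beta>\<^sup>2 / 2)) * ennreal (normal_density \<beta> 1 y) \<partial>lborel)"
    by (intro nn_integral_cong) (simp add: eq normal_density_nonneg flip: ennreal_mult)
  also have "\<dots> = ennreal (exp (\<alpha> + \<beta>\<^sup>2 / 2)) * (\<integral>\<^sup>+ y. ennreal (normal_density \<beta> 1 y) \<partial>lborel)"
    by (rule nn_integral_cmult) (unfold normal_density_def, measurable)
  also have "(\<integral>\<^sup>+ y. ennreal (normal_density \<beta> 1 y) \<partial>lborel) = 1"
  proof -
    interpret prob_space "density lborel (normal_density \<beta> 1)" by (rule prob_space_normal_density) simp
    have "emeasure (density lborel (normal_density \<beta> 1)) (space (density lborel (normal_density \<beta> 1))) = 1"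
      by (rule emeasure_space_1)
    then show ?thesis by (simp add: emeasure_density)
  qed
  finally show ?thesis by simp
qed

lemma nnint_M0_gen:
  assumes "0 \<le> \<gamma>" "\<gamma> \<le> 1" and [measurable]: "f \<in> borel_measurable (M0 \<gamma>)"
  shows "(\<integral>\<^sup>+ z. f z \<partial>M0 \<gamma>) = ennreal (1 - \<gamma>) * (\<integral>\<^sup>+ y. f (False, y) \<partial>density lborel std_normal_density)
           + ennreal \<gamma> * (\<integral>\<^sup>+ y. f (True, y) \<partial>density lborel std_normal_density)"
proof -
  interpret N: prob_space "density lborel std_normal_density" by (rule prob_space_normal_density) simp
  have "(\<integral>\<^sup>+ z. f z \<partial>M0 \<gamma>) = (\<integral>\<^sup>+ x. \<integral>\<^sup>+ y. f (x, y) \<partial>density lborel std_normal_density \<partial>measure_pmf (bernoulli_pmf \<gamma>))"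
    by (rule N.nn_integral_fst[symmetric]) simp
  also have "\<dots> = (\<integral>\<^sup>+ x. ennreal (pmf (bernoulli_pmf \<gamma>) x) * (\<integral>\<^sup>+ y. f (x, y) \<partial>density lborel std_normal_density) \<partial>count_space UNIV)"
    by (rule nn_integral_measure_pmf)
  also have "\<dots> = (\<Sum>x\<in>UNIV. ennreal (pmf (bernoulli_pmf \<gamma>) x) * (\<integral>\<^sup>+ y. f (x, y) \<partial>density lborel std_normal_density))"
    by (rule nn_integral_count_space_finite) simp
  also have "\<dots> = ennreal (1 - \<gamma>) * (\<integral>\<^sup>+ y. f (False, y) \<partial>density lborel std_normal_density)
           + ennreal \<gamma> * (\<integral>\<^sup>+ y. f (True, y) \<partial>density lborel std_normal_density)"
    using assms by (simp add: UNIV_bool add.commute)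
  finally show ?thesis .
qed

lemma nnint_M0_exp:
  assumes "0 \<le> \<gamma>" "\<gamma> \<le> 1"
  shows "(\<integral>\<^sup>+ z. ennreal (if fst z then exp (\<alpha> + \<beta> * snd z) else 1) \<partial>M0 \<gamma>) = ennreal (1 - \<gamma> + \<gamma> * exp (\<alpha> + \<beta>\<^sup>2 / 2))"
proof -
  interpret N: prob_space "density lborel std_normal_density" by (rule prob_space_normal_density) simp
  have e1: "emeasure (density lborel std_normal_density) UNIV = 1" using N.emeasure_space_1 by simp
  show ?thesis
    using assms by (subst nnint_M0_gen) (simp_all add: normal_mgf e1 flip: ennreal_mult ennreal_plus)
qed

lemma nnint_M0_ind:
  assumes "0 \<le> \<gamma>" "\<gamma> \<le> 1" "0 \<le> x"
  shows "(\<integral>\<^sup>+ z. ennreal (if fst z then x else 0) \<partial>M0 \<gamma>) = ennreal (\<gamma> * x)"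
proof -
  interpret N: prob_space "density lborel std_normal_density" by (rule prob_space_normal_density) simp
  have e1: "emeasure (density lborel std_normal_density) UNIV = 1" using N.emeasure_space_1 by simp
  show ?thesis
    using assms by (subst nnint_M0_gen) (simp_all add: e1 flip: ennreal_mult)
qed

lemma prod_PiM_M0:
  assumes "finite I" "\<And>t. t \<in> I \<Longrightarrow> f t \<in> borel_measurable (M0 \<gamma>)"
  shows "(\<integral>\<^sup>+ \<omega>. (\<Prod>t\<in>I. f t (\<omega> t)) \<partial>PiM I (\<lambda>_. M0 \<gamma>)) = (\<Prod>t\<in>I. \<integral>\<^sup>+ z. f t z \<partial>M0 \<gamma>)"
proof -
  interpret product_sigma_finite "\<lambda>_. M0 \<gamma>"
    unfolding product_sigma_finite_def using prob_M0 prob_space_imp_sigma_finite by blast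
  show ?thesis by (rule product_nn_integral_prod[OF assms])
qed

lemma sum_PiM_M0:
  assumes "finite I" "\<And>t. t \<in> I \<Longrightarrow> f t \<in> borel_measurable (M0 \<gamma>)"
  shows "(\<integral>\<^sup>+ \<omega>. (\<Sum>t\<in>I. f t (\<omega> t)) \<partial>PiM I (\<lambda>_. M0 \<gamma>)) = (\<Sum>t\<in>I. \<integral>\<^sup>+ z. f t z \<partial>M0 \<gamma>)"
proof -
  interpret M: prob_space "M0 \<gamma>" by (rule prob_M0)
  have one: "(\<integral>\<^sup>+ z. 1 \<partial>M0 \<gamma>) = 1" by (simp add: M.emeasure_space_1)
  have meas: "(\<lambda>\<omega>. f t (\<omega> t)) \<in> borel_measurable (PiM I (\<lambda>_. M0 \<gamma>))" if "t \<in> I" for t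
    using assms(2)[OF that] that by measurable
  have "(\<integral>\<^sup>+ \<omega>. f t (\<omega> t) \<partial>PiM I (\<lambda>_. M0 \<gamma>)) = \<integral>\<^sup>+ z. f t z \<partial>M0 \<gamma>" if t: "t \<in> I" for t
  proof -
    have "(\<integral>\<^sup>+ \<omega>. f t (\<omega> t) \<partial>PiM I (\<lambda>_. M0 \<gamma>)) =
          (\<integral>\<^sup>+ \<omega>. (\<Prod>t'\<in>I. (if t' = t then f t else (\<lambda>_. 1)) (\<omega> t')) \<partial>PiM I (\<lambda>_. M0 \<gamma>))"
    proof (intro nn_integral_cong)
      fix x
      have "(\<Prod>t'\<in>I. (if t' = t then f t else (\<lambda>_. 1)) (x t')) = (\<Prod>t'\<in>I. if t' = t then f t (x t') else 1)"
        by (rule prod.cong) auto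
      also have "\<dots> = f t (x t)" using t assms(1) by (simp add: prod.delta')
      finally show "f t (x t) = (\<Prod>t'\<in>I. (if t' = t then f t else (\<lambda>_. 1)) (x t'))" by simp
    qed
    also have "\<dots> = (\<Prod>t'\<in>I. \<integral>\<^sup>+ z. (if t' = t then f t else (\<lambda>_. 1)) z \<partial>M0 \<gamma>)"
      using assms by (intro prod_PiM_M0) auto
    also have "\<dots> = \<integral>\<^sup>+ z. f t z \<partial>M0 \<gamma>"
      using t assms(1) by (simp add: if_distrib M.emeasure_space_1 prod.delta' cong: if_cong)
    finally show ?thesis .
  qed
  then show ?thesis
    using meas by (subst nn_integral_sum) auto
qed

definition ten :: "(idx \<Rightarrow> real) \<Rightarrow> tensor" where
  "ten g = (\<lambda>i j k. g (i, j, k))"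

lemma tprod_cong:
  assumes "n3 > 0" "\<And>l k. l < r \<Longrightarrow> k < n3 \<Longrightarrow> A i l k = A' i l k"
    "\<And>l q. l < r \<Longrightarrow> q < n3 \<Longrightarrow> B l j q = B' l j q"
  shows "tprod r n3 A B i j k = tprod r n3 A' B' i j k"
  unfolding tprod_def using assms by (intro sum.cong refl) auto

lemma frob_sq_sum:
  "frob_sq n1 n2 n3 F = (\<Sum>(i,j,k)\<in>index_set n1 n2 n3. (F i j k)\<^sup>2)"
  unfolding frob_sq_def index_set_def
  by (simp add: sum.cartesian_product)

lemma l0norm_alt: "l0norm r n2 n3 B = card {t \<in> {..<r} \<times> {..<n2} \<times> {..<n3}. B (fst t) (fst (snd t)) (snd (snd t)) \<noteq> 0}"
  unfolding l0norm_def by (rule arg_cong[where f=card]) auto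

lemma levels_floor:
  assumes "2 \<le> \<theta>" "0 \<le> x" "x \<le> h" "0 < h"
  defines "y \<equiv> real (nat \<lfloor>x * (real \<theta> - 1) / h\<rfloor>) * h / (real \<theta> - 1)"
  shows "y \<in> levels 0 h \<theta>" "0 \<le> y" "y \<le> x" "x - y \<le> h / (real \<theta> - 1)" "x = 0 \<Longrightarrow> y = 0"
proof -
  have th: "real \<theta> - 1 > 0" using assms by simp
  have f0: "0 \<le> \<lfloor>x * (real \<theta> - 1) / h\<rfloor>" using assms th by simp
  have fle: "x * (real \<theta> - 1) / h \<le> real \<theta> - 1" using assms th
    by (simp add: divide_le_eq mult_right_mono mult.commute)
  have "\<lfloor>x * (real \<theta> - 1) / h\<rfloor> \<le> int \<theta> - 1"
    using fle by (metis floor_mono floor_of_int of_int_1 of_int_diff of_int_of_nat_eq)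
  then have lt: "nat \<lfloor>x * (real \<theta> - 1) / h\<rfloor> < \<theta>" using assms by linarith
  show "y \<in> levels 0 h \<theta>" unfolding levels_def y_def using lt by auto
  show "0 \<le> y" unfolding y_def using assms th by simp
  have a1: "real (nat \<lfloor>x * (real \<theta> - 1) / h\<rfloor>) \<le> x * (real \<theta> - 1) / h" using f0 by simp
  have a2: "x * (real \<theta> - 1) / h - 1 < real (nat \<lfloor>x * (real \<theta> - 1) / h\<rfloor>)" using f0 by linarith
  show "y \<le> x" unfolding y_def using a1 th assms
    by (simp add: divide_le_eq le_divide_eq mult.commute mult.left_commute)
  define F where "F = real (nat \<lfloor>x * (real \<theta> - 1) / h\<rfloor>)"
  have yF: "y * (real \<theta> - 1) = F * h" using th unfolding y_def F_def by simp
  have "(x * (real \<theta> - 1) / h - 1) * h < F * h" using a2 assms(4) unfolding F_def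
    by (intro mult_strict_right_mono) auto
  also have "(x * (real \<theta> - 1) / h - 1) * h = x * (real \<theta> - 1) - h" using assms(4) by (simp add: field_simps)
  finally have "(x - y) * (real \<theta> - 1) \<le> h" using yF by (simp add: algebra_simps)
  then show "x - y \<le> h / (real \<theta> - 1)" using th by (simp add: field_simps)
  show "x = 0 \<Longrightarrow> y = 0" unfolding y_def by simp
qed

definition qf :: "nat \<Rightarrow> real \<Rightarrow> real \<Rightarrow> real" where
  "qf \<theta> h x = real (nat \<lfloor>x * (real \<theta> - 1) / h\<rfloor>) * h / (real \<theta> - 1)"

lemma prod_diff_bound:
  fixes x y x' y' e b :: real
  assumes "0 \<le> x'" "x' \<le> x" "x \<le> 1" "0 \<le> y'" "y' \<le> y" "y \<le> b"
    "x - x' \<le> e" "y - y' \<le> b * e" "0 \<le> e"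
  shows "0 \<le> x * y - x' * y'" "x * y - x' * y' \<le> 2 * b * e"
proof -
  have "x * y - x' * y' = (x - x') * y + x' * (y - y')" by (simp add: algebra_simps)
  moreover have "(x - x') * y \<le> e * b" using assms by (intro mult_mono) auto
  moreover have "x' * (y - y') \<le> 1 * (b * e)" using assms by (intro mult_mono) auto
  moreover have "0 \<le> (x - x') * y" "0 \<le> x' * (y - y')" using assms by auto
  ultimately show "0 \<le> x * y - x' * y'" "x * y - x' * y' \<le> 2 * b * e" by (auto simp: algebra_simps)
qed

lemma quantize:
  assumes th: "2 \<le> \<theta>" and "b > 0" "c > 0" "n3 > 0"
    and As: "\<forall>i<n1. \<forall>l<r. \<forall>k<n3. 0 \<le> As i l k \<and> As i l k \<le> 1"
    and Bs: "\<forall>l<r. \<forall>j<n2. \<forall>k<n3. 0 \<le> Bs l j k \<and> Bs l j k \<le> b"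
    and Xs: "\<forall>i<n1. \<forall>j<n2. \<forall>k<n3. 0 \<le> tprod r n3 As Bs i j k \<and> tprod r n3 As Bs i j k \<le> c / 2"
  shows "\<exists>AQ BQ. feasible n1 n2 n3 r \<theta> b c AQ BQ \<and> l0norm r n2 n3 BQ \<le> l0norm r n2 n3 Bs \<and>
     (\<forall>i<n1. \<forall>j<n2. \<forall>k<n3. 0 \<le> tprod r n3 As Bs i j k - tprod r n3 AQ BQ i j k \<and>
        tprod r n3 As Bs i j k - tprod r n3 AQ BQ i j k \<le> real n3 * (real r * (2 * b * (1 / (real \<theta> - 1)))))"
proof -
  define AQ where "AQ = (\<lambda>i l k. if i < n1 \<and> l < r \<and> k < n3 then qf \<theta> 1 (As i l k) else 0)"
  define BQ where "BQ = (\<lambda>l j k. if l < r \<and> j < n2 \<and> k < n3 then qf \<theta> b (Bs l j k) else 0)"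
  have thp: "real \<theta> - 1 > 0" using th by simp
  have A: "AQ i l k \<in> levels 0 1 \<theta> \<and> 0 \<le> AQ i l k \<and> AQ i l k \<le> As i l k \<and> As i l k - AQ i l k \<le> 1 / (real \<theta> - 1)"
    if "i < n1" "l < r" "k < n3" for i l k
    using levels_floor[OF th, of "As i l k" 1] As that unfolding AQ_def qf_def by auto
  have B: "BQ l j k \<in> levels 0 b \<theta> \<and> 0 \<le> BQ l j k \<and> BQ l j k \<le> Bs l j k \<and> Bs l j k - BQ l j k \<le> b / (real \<theta> - 1)
      \<and> (Bs l j k = 0 \<longrightarrow> BQ l j k = 0)"
    if "l < r" "j < n2" "k < n3" for l j k
    using levels_floor[OF th, of "Bs l j k" b] Bs that \<open>b > 0\<close> unfolding BQ_def qf_def by auto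
  have tm: "0 \<le> As i l ((k + n3 - q) mod n3) * Bs l j q - AQ i l ((k + n3 - q) mod n3) * BQ l j q \<and>
      As i l ((k + n3 - q) mod n3) * Bs l j q - AQ i l ((k + n3 - q) mod n3) * BQ l j q \<le> 2 * b * (1 / (real \<theta> - 1))"
    if "i < n1" "j < n2" "l < r" "q < n3" for i j l q k
  proof -
    have km: "(k + n3 - q) mod n3 < n3" using \<open>n3 > 0\<close> by simp
    note a = A[OF that(1) that(3) km] and bb = B[OF that(3) that(2) that(4)]
    have "b / (real \<theta> - 1) = b * (1 / (real \<theta> - 1))" by simp
    then show ?thesis
      using prod_diff_bound[of "AQ i l ((k + n3 - q) mod n3)" "As i l ((k + n3 - q) mod n3)" "BQ l j q" "Bs l j q" b "1 / (real \<theta> - 1)"]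
        a bb As Bs that km thp by auto
  qed
  have diff: "tprod r n3 As Bs i j k - tprod r n3 AQ BQ i j k =
      (\<Sum>q<n3. \<Sum>l<r. As i l ((k + n3 - q) mod n3) * Bs l j q - AQ i l ((k + n3 - q) mod n3) * BQ l j q)" for i j k
    unfolding tprod_def by (simp add: sum_subtractf)
  have D: "0 \<le> tprod r n3 As Bs i j k - tprod r n3 AQ BQ i j k \<and>
        tprod r n3 As Bs i j k - tprod r n3 AQ BQ i j k \<le> real n3 * (real r * (2 * b * (1 / (real \<theta> - 1))))"
    if "i < n1" "j < n2" "k < n3" for i j k
  proof -
    have "(\<Sum>q<n3. \<Sum>l<r. As i l ((k + n3 - q) mod n3) * Bs l j q - AQ i l ((k + n3 - q) mod n3) * BQ l j q)
        \<le> real (card {..<n3}) * (real (card {..<r}) * (2 * b * (1 / (real \<theta> - 1))))"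
      using tm that by (intro sum_bounded_above) (auto intro!: sum_bounded_above)
    moreover have "0 \<le> (\<Sum>q<n3. \<Sum>l<r. As i l ((k + n3 - q) mod n3) * Bs l j q - AQ i l ((k + n3 - q) mod n3) * BQ l j q)"
      using tm that by (intro sum_nonneg) auto
    ultimately show ?thesis using diff by simp
  qed
  have nonneg: "0 \<le> tprod r n3 AQ BQ i j k" if "i < n1" "j < n2" "k < n3" for i j k
  proof -
    have km: "(k + n3 - q) mod n3 < n3" for q using \<open>n3 > 0\<close> by simp
    show ?thesis unfolding tprod_def using A[OF that(1) _ km] B[OF _ that(2)] by (intro sum_nonneg) auto
  qed
  have feas: "feasible n1 n2 n3 r \<theta> b c AQ BQ"
    unfolding feasible_def LSet_def DSet_def
  proof (intro conjI allI impI CollectI)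
    fix i j k assume "i < n1" "j < n2" "k < n3"
    then show "0 \<le> tprod r n3 AQ BQ i j k" "tprod r n3 AQ BQ i j k \<le> c"
      using nonneg D[of i j k] Xs \<open>c > 0\<close> by force+
  qed (use A B in auto)
  have l0: "l0norm r n2 n3 BQ \<le> l0norm r n2 n3 Bs"
    unfolding l0norm_def
  proof (rule card_mono)
    show "finite {(l, j, k). l < r \<and> j < n2 \<and> k < n3 \<and> Bs l j k \<noteq> 0}"
      by (rule finite_subset[of _ "{..<r} \<times> {..<n2} \<times> {..<n3}"]) auto
    show "{(l, j, k). l < r \<and> j < n2 \<and> k < n3 \<and> BQ l j k \<noteq> 0} \<subseteq> {(l, j, k). l < r \<and> j < n2 \<and> k < n3 \<and> Bs l j k \<noteq> 0}"
      using B by auto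
  qed
  show ?thesis using feas l0 D by blast
qed

lemma levels_image: "levels lo hi \<theta> = (\<lambda>t. lo + real t * (hi - lo) / (real \<theta> - 1)) ` {..<\<theta>}"
  unfolding levels_def by auto

lemma finite_levels: "finite (levels lo hi \<theta>)"
  unfolding levels_image by simp

lemma card_levels: "card (levels lo hi \<theta>) \<le> \<theta>"
  unfolding levels_image by (metis card_image_le card_lessThan finite_lessThan)

lemma card_PiE_levels:
  assumes "finite E"
  shows "real (card (PiE E (\<lambda>_. levels lo hi \<theta>))) \<le> real \<theta> ^ card E"
proof -
  have "card (PiE E (\<lambda>_. levels lo hi \<theta>)) = card (levels lo hi \<theta>) ^ card E"
    using assms by (simp add: card_PiE)
  also have "\<dots> \<le> \<theta> ^ card E" by (intro power_mono card_levels) auto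
  finally show ?thesis by (metis of_nat_le_iff of_nat_power)
qed

lemma prod_if_const:
  assumes "finite E"
  shows "(\<Prod>e\<in>E. if P e then x else (1::real)) = x ^ card {e \<in> E. P e}"
proof -
  have "(\<Prod>e\<in>E. if P e then x else (1::real)) = (\<Prod>e\<in>{e \<in> E. P e}. x)"
    using assms by (simp add: prod.If_cases Int_def)
  then show ?thesis by simp
qed

lemma sum_levels_weight:
  assumes "0 \<le> w"
  shows "(\<Sum>x\<in>levels lo hi \<theta>. if x \<noteq> 0 then w else 1) \<le> 1 + real \<theta> * w"
proof -
  let ?L = "levels lo hi \<theta>"
  have fin: "finite ?L" by (rule finite_levels)
  have "(\<Sum>x\<in>?L. if x \<noteq> 0 then w else 1) = (\<Sum>x\<in>?L \<inter> {x. x \<noteq> 0}. w) + (\<Sum>x\<in>?L - {x. x \<noteq> 0}. 1)"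
    using fin by (simp add: sum.If_cases Diff_eq)
  also have "(\<Sum>x\<in>?L - {x. x \<noteq> 0}. (1::real)) \<le> 1"
  proof -
    have "?L - {x. x \<noteq> 0} \<subseteq> {0}" by auto
    then have "card (?L - {x. x \<noteq> 0}) \<le> card {0::real}" by (intro card_mono) auto
    then have "card (?L - {x. x \<noteq> 0}) \<le> 1" by simp
    then show ?thesis by simp
  qed
  also have "(\<Sum>x\<in>?L \<inter> {x. x \<noteq> 0}. w) \<le> real \<theta> * w"
  proof -
    have "card (?L \<inter> {x. x \<noteq> 0}) \<le> \<theta>" using card_levels[of lo hi \<theta>] fin
      by (meson card_mono inf_le1 le_trans)
    then show ?thesis using assms by (simp add: mult_right_mono)
  qed
  finally show ?thesis by simp
qed

lemma sum_PiE_weight: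
  assumes "finite E" "0 \<le> \<mu>"
  shows "(\<Sum>g\<in>PiE E (\<lambda>_. levels lo hi \<theta>). exp (- \<mu> * real (card {e \<in> E. g e \<noteq> 0})))
          \<le> exp (real (card E) * real \<theta> * exp (- \<mu>))"
proof -
  have "(\<Sum>g\<in>PiE E (\<lambda>_. levels lo hi \<theta>). exp (- \<mu> * real (card {e \<in> E. g e \<noteq> 0})))
      = (\<Sum>g\<in>PiE E (\<lambda>_. levels lo hi \<theta>). \<Prod>e\<in>E. (\<lambda>e x. if x \<noteq> 0 then exp (- \<mu>) else 1) e (g e))"
  proof (intro sum.cong refl)
    fix g
    have "exp (- \<mu> * real (card {e \<in> E. g e \<noteq> 0})) = exp (- \<mu>) ^ card {e \<in> E. g e \<noteq> 0}"
      by (simp add: exp_of_nat_mult[symmetric] mult.commute)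
    then show "exp (- \<mu> * real (card {e \<in> E. g e \<noteq> 0})) = (\<Prod>e\<in>E. (\<lambda>e x. if x \<noteq> 0 then exp (- \<mu>) else 1) e (g e))"
      using prod_if_const[OF assms(1), of "\<lambda>e. g e \<noteq> 0" "exp (- \<mu>)"] by simp
  qed
  also have "\<dots> = (\<Prod>e\<in>E. \<Sum>x\<in>levels lo hi \<theta>. if x \<noteq> 0 then exp (- \<mu>) else 1)"
    using assms(1) by (subst prod_sum_PiE) (auto simp: finite_levels)
  also have "\<dots> \<le> (\<Prod>e\<in>E. exp (real \<theta> * exp (- \<mu>)))"
  proof (intro prod_mono conjI)
    fix e
    show "0 \<le> (\<Sum>x\<in>levels lo hi \<theta>. if x \<noteq> 0 then exp (- \<mu>) else 1)" by (intro sum_nonneg) auto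
    have "(\<Sum>x\<in>levels lo hi \<theta>. if x \<noteq> 0 then exp (- \<mu>) else 1) \<le> 1 + real \<theta> * exp (- \<mu>)"
      by (rule sum_levels_weight) simp
    also have "\<dots> \<le> exp (real \<theta> * exp (- \<mu>))" using exp_ge_add_one_self[of "real \<theta> * exp (- \<mu>)"] by (simp add: add.commute)
    finally show "(\<Sum>x\<in>levels lo hi \<theta>. if x \<noteq> 0 then exp (- \<mu>) else 1) \<le> exp (real \<theta> * exp (- \<mu>))"
      by (simp add: add.commute)
  qed
  also have "\<dots> = exp (real (card E) * real \<theta> * exp (- \<mu>))"
    by (simp add: exp_of_nat_mult[symmetric] mult.assoc)
  finally show ?thesis .
qed

lemma exp_chord:
  fixes t y :: real
  assumes "0 \<le> t" "t \<le> 1"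
  shows "exp (t * y) \<le> 1 - t + t * exp y"
  using convex_onD[OF exp_convex, of t 0 y] assms by (simp add: algebra_simps)

lemma exp_small: "0 \<le> v \<Longrightarrow> v \<le> 1 \<Longrightarrow> exp v \<le> 1 + 2 * (v::real)"
proof -
  assume a: "0 \<le> v" "v \<le> 1"
  have "v * exp 1 \<le> v * 3" using a by (intro mult_left_mono exp_le) auto
  then show ?thesis using exp_chord[of v 1] a by (simp add: algebra_simps)
qed

lemma per_t:
  fixes \<gamma> \<sigma> s c d q :: real
  assumes g: "0 \<le> \<gamma>" "\<gamma> \<le> 1" and sg: "\<sigma> > 0" and s: "0 < s" "s \<le> 1/2" and c: "c > 0"
    and d: "\<bar>d\<bar> \<le> c" and v: "3 * s\<^sup>2 * q\<^sup>2 / (2 * \<sigma>\<^sup>2) \<le> 1"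
  shows "1 - \<gamma> + \<gamma> * exp (- s * d\<^sup>2 / (2 * \<sigma>\<^sup>2) + (s * (d - q) / \<sigma>)\<^sup>2 / 2)
     \<le> exp (- (\<gamma> * (1 - exp (- (s * c\<^sup>2 / (8 * \<sigma>\<^sup>2)))) / c\<^sup>2) * d\<^sup>2 + 2 * \<gamma> * (3 * s\<^sup>2 * q\<^sup>2 / (2 * \<sigma>\<^sup>2)))"
proof -
  define v where "v = 3 * s\<^sup>2 * q\<^sup>2 / (2 * \<sigma>\<^sup>2)"
  define U where "U = s * c\<^sup>2 / (8 * \<sigma>\<^sup>2)"
  define t where "t = d\<^sup>2 / c\<^sup>2"
  have v0: "0 \<le> v" unfolding v_def by simp
  have v1: "v \<le> 1" using v unfolding v_def .
  have t0: "0 \<le> t" unfolding t_def by simp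
  have "d\<^sup>2 \<le> c\<^sup>2" using d c by (metis abs_le_square_iff abs_of_pos)
  then have t1: "t \<le> 1" unfolding t_def using c by simp
  have sq: "(d - q)\<^sup>2 \<le> 3/2 * d\<^sup>2 + 3 * q\<^sup>2"
  proof -
    have "0 \<le> (d + 2 * q)\<^sup>2 / 2" by simp
    then show ?thesis by (simp add: power2_eq_square algebra_simps)
  qed
  have "(s * (d - q) / \<sigma>)\<^sup>2 / 2 = s\<^sup>2 * (d - q)\<^sup>2 / (2 * \<sigma>\<^sup>2)"
    by (simp add: power_mult_distrib power_divide)
  also have "\<dots> \<le> s\<^sup>2 * (3/2 * d\<^sup>2 + 3 * q\<^sup>2) / (2 * \<sigma>\<^sup>2)"
    using sq sg by (intro divide_right_mono mult_left_mono) auto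
  finally have E1: "- s * d\<^sup>2 / (2 * \<sigma>\<^sup>2) + (s * (d - q) / \<sigma>)\<^sup>2 / 2 \<le>
      - s * d\<^sup>2 / (2 * \<sigma>\<^sup>2) + s\<^sup>2 * (3/2 * d\<^sup>2 + 3 * q\<^sup>2) / (2 * \<sigma>\<^sup>2)" by simp
  have "- s * d\<^sup>2 / (2 * \<sigma>\<^sup>2) + s\<^sup>2 * (3/2 * d\<^sup>2 + 3 * q\<^sup>2) / (2 * \<sigma>\<^sup>2)
      = (- s + 3/2 * s\<^sup>2) * d\<^sup>2 / (2 * \<sigma>\<^sup>2) + v"
    unfolding v_def using sg by (simp add: field_simps)
  also have "(- s + 3/2 * s\<^sup>2) * d\<^sup>2 / (2 * \<sigma>\<^sup>2) \<le> (- s / 4) * d\<^sup>2 / (2 * \<sigma>\<^sup>2)"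
  proof -
    have "s * s \<le> s * (1/2)" using s by (intro mult_left_mono) auto
    then have "- s + 3/2 * s\<^sup>2 \<le> - s / 4" by (simp add: power2_eq_square)
    then show ?thesis using sg by (intro divide_right_mono mult_right_mono) auto
  qed
  also have "(- s / 4) * d\<^sup>2 / (2 * \<sigma>\<^sup>2) = t * (- U)"
    unfolding t_def U_def using c by (simp add: field_simps)
  finally have E: "- s * d\<^sup>2 / (2 * \<sigma>\<^sup>2) + (s * (d - q) / \<sigma>)\<^sup>2 / 2 \<le> t * (- U) + v"
    using E1 by linarith
  have "exp (- s * d\<^sup>2 / (2 * \<sigma>\<^sup>2) + (s * (d - q) / \<sigma>)\<^sup>2 / 2) \<le> exp (t * (- U)) * exp v"
    using E by (simp add: exp_add[symmetric])
  also have "\<dots> \<le> exp (t * (- U)) * (1 + 2 * v)"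
    using exp_small[OF v0 v1] by (intro mult_left_mono) auto
  also have "\<dots> \<le> exp (t * (- U)) + 2 * v"
  proof -
    have "exp (t * (- U)) \<le> 1" using t0 s sg c unfolding U_def by (simp add: mult_nonneg_nonneg)
    then have "exp (t * (- U)) * (2 * v) \<le> 1 * (2 * v)" using v0 by (intro mult_right_mono) auto
    then show ?thesis by (simp add: algebra_simps)
  qed
  also have "\<dots> \<le> 1 - t + t * exp (- U) + 2 * v"
    using exp_chord[OF t0 t1, of "- U"] by simp
  finally have X: "exp (- s * d\<^sup>2 / (2 * \<sigma>\<^sup>2) + (s * (d - q) / \<sigma>)\<^sup>2 / 2) \<le> 1 - t + t * exp (- U) + 2 * v" .
  have "1 - \<gamma> + \<gamma> * exp (- s * d\<^sup>2 / (2 * \<sigma>\<^sup>2) + (s * (d - q) / \<sigma>)\<^sup>2 / 2)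
      \<le> 1 - \<gamma> + \<gamma> * (1 - t + t * exp (- U) + 2 * v)"
    using X g by (intro add_left_mono mult_left_mono) auto
  also have "\<dots> = 1 + (- (\<gamma> * (1 - exp (- U)) / c\<^sup>2) * d\<^sup>2 + 2 * \<gamma> * v)"
    unfolding t_def using c by (simp add: field_simps)
  also have "\<dots> \<le> exp (- (\<gamma> * (1 - exp (- U)) / c\<^sup>2) * d\<^sup>2 + 2 * \<gamma> * v)"
    by (rule exp_ge_add_one_self[THEN order_trans[rotated], OF order_refl, of "_"]) 
  finally show ?thesis unfolding U_def v_def by simp
qed

lemma neg_ln_normal:
  assumes "\<sigma> > 0"
  shows "- ln (normal_density \<mu> \<sigma> y) = ln (sqrt (2 * pi * \<sigma>\<^sup>2)) + (y - \<mu>)\<^sup>2 / (2 * \<sigma>\<^sup>2)"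
proof -
  have p: "sqrt (2 * pi * \<sigma>\<^sup>2) > 0" using assms by simp
  have "normal_density \<mu> \<sigma> y = exp (-(y - \<mu>)\<^sup>2 / (2 * \<sigma>\<^sup>2)) / sqrt (2 * pi * \<sigma>\<^sup>2)"
    unfolding normal_density_def by simp
  then have "ln (normal_density \<mu> \<sigma> y) = -(y - \<mu>)\<^sup>2 / (2 * \<sigma>\<^sup>2) - ln (sqrt (2 * pi * \<sigma>\<^sup>2))"
    using p by (simp add: ln_div)
  then show ?thesis by simp
qed

lemma neg_loglik_eq:
  assumes "\<sigma> > 0"
  shows "neg_loglik \<sigma> \<Omega> X Y = (\<Sum>t\<in>\<Omega>. ln (sqrt (2 * pi * \<sigma>\<^sup>2)) + (Y t - X (fst t) (fst (snd t)) (snd (snd t)))\<^sup>2 / (2 * \<sigma>\<^sup>2))"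
  unfolding neg_loglik_def
  by (intro sum.cong refl) (auto simp: neg_ln_normal[OF assms] split: prod.splits)

lemma meas_prod_comp:
  assumes "finite I" "\<And>t. t \<in> I \<Longrightarrow> f t \<in> borel_measurable N"
  shows "(\<lambda>\<omega>. \<Prod>t\<in>I. f t (\<omega> t) :: ennreal) \<in> borel_measurable (PiM I (\<lambda>_. N))"
proof (intro borel_measurable_prod_ennreal)
  fix t assume t: "t \<in> I"
  show "(\<lambda>\<omega>. f t (\<omega> t)) \<in> borel_measurable (PiM I (\<lambda>_. N))"
    using measurable_compose[OF measurable_component_singleton[OF t] assms(2)[OF t]] by simp
qed

lemma meas_sum_comp:
  assumes "finite I" "\<And>t. t \<in> I \<Longrightarrow> f t \<in> borel_measurable N"
  shows "(\<lambda>\<omega>. \<Sum>t\<in>I. f t (\<omega> t) :: ennreal) \<in> borel_measurable (PiM I (\<lambda>_. N))"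
proof (intro borel_measurable_sum)
  fix t assume t: "t \<in> I"
  show "(\<lambda>\<omega>. f t (\<omega> t)) \<in> borel_measurable (PiM I (\<lambda>_. N))"
    using measurable_compose[OF measurable_component_singleton[OF t] assms(2)[OF t]] by simp
qed

lemma meas_comp_real:
  assumes "t \<in> I" "f \<in> borel_measurable N"
  shows "(\<lambda>\<omega>. f (\<omega> t) :: real) \<in> borel_measurable (PiM I (\<lambda>_. N))"
  using measurable_compose[OF measurable_component_singleton[OF assms(1)] assms(2)] by simp

lemma main_bound:
  fixes n1 n2 n3 r \<theta> :: nat and b c \<sigma> lam s \<gamma> :: real and Xs AQ BQ :: tensor
    and est :: "idx set \<Rightarrow> (idx \<Rightarrow> real) \<Rightarrow> tensor"
  assumes n3: "n3 > 0" and th: "\<theta> > 0" and sg: "\<sigma> > 0" and c: "c > 0" and g: "0 < \<gamma>" "\<gamma> \<le> 1"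
    and s: "0 < s" "s \<le> 1/2" and lam: "0 \<le> lam"
    and Xs: "\<forall>i<n1. \<forall>j<n2. \<forall>k<n3. 0 \<le> Xs i j k \<and> Xs i j k \<le> c"
    and fQ: "feasible n1 n2 n3 r \<theta> b c AQ BQ"
    and qv: "\<forall>i<n1. \<forall>j<n2. \<forall>k<n3. 3 * s\<^sup>2 * (tprod r n3 AQ BQ i j k - Xs i j k)\<^sup>2 / (2 * \<sigma>\<^sup>2) \<le> 1"
    and est: "is_pml_estimator n1 n2 n3 r \<theta> b c \<sigma> lam est"
    and meas: "(\<lambda>\<omega>. frob_sq n1 n2 n3 (\<lambda>i j k. est (Omega_of n1 n2 n3 \<omega>) (Y_of n1 n2 n3 \<sigma> Xs \<omega>) i j k - Xs i j k))
           \<in> borel_measurable (sample_space n1 n2 n3 \<gamma>)"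
  defines "a \<equiv> \<gamma> * (1 - exp (- (s * c\<^sup>2 / (8 * \<sigma>\<^sup>2)))) / c\<^sup>2"
    and "Q \<equiv> (\<Sum>(i,j,k)\<in>index_set n1 n2 n3. (tprod r n3 AQ BQ i j k - Xs i j k)\<^sup>2)"
  defines "T \<equiv> real \<theta> ^ (n1 * r * n3) * exp (real (r * n2 * n3) * real \<theta> * exp (- (s * lam)) + 3 * \<gamma> * s\<^sup>2 * Q / \<sigma>\<^sup>2)"
  shows "(\<integral>\<^sup>+ \<omega>. ennreal (frob_sq n1 n2 n3
              (\<lambda>i j k. est (Omega_of n1 n2 n3 \<omega>) (Y_of n1 n2 n3 \<sigma> Xs \<omega>) i j k - Xs i j k)) \<partial>sample_space n1 n2 n3 \<gamma>)
         \<le> ennreal ((ln T + 1 + s * (\<gamma> * Q / (2 * \<sigma>\<^sup>2) + lam * real (l0norm r n2 n3 BQ))) / a)"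
proof -
  define I where "I = index_set n1 n2 n3"
  define EA where "EA = {..<n1} \<times> {..<r} \<times> {..<n3}"
  define EB where "EB = {..<r} \<times> {..<n2} \<times> {..<n3}"
  define CA where "CA = PiE EA (\<lambda>_. levels 0 1 \<theta>)"
  define CB where "CB = PiE EB (\<lambda>_. levels 0 b \<theta>)"
  define dd where "dd = (\<lambda>(P :: (idx \<Rightarrow> real) \<times> (idx \<Rightarrow> real)) (t :: idx).
     tprod r n3 (ten (fst P)) (ten (snd P)) (fst t) (fst (snd t)) (snd (snd t)) - Xs (fst t) (fst (snd t)) (snd (snd t)))"
  define qq where "qq = (\<lambda>t :: idx. tprod r n3 AQ BQ (fst t) (fst (snd t)) (snd (snd t)) - Xs (fst t) (fst (snd t)) (snd (snd t)))"
  define Cand where "Cand = {P \<in> CA \<times> CB. \<forall>t\<in>I. \<bar>dd P t\<bar> \<le> c}"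
  define K where "K = (\<lambda>P. a * (\<Sum>t\<in>I. (dd P t)\<^sup>2) - s * lam * real (l0norm r n2 n3 (ten (snd P))))"
  define al where "al = (\<lambda>P t. - s * (dd P t)\<^sup>2 / (2 * \<sigma>\<^sup>2))"
  define be where "be = (\<lambda>P t. s * (dd P t - qq t) / \<sigma>)"
  define Wf where "Wf = (\<lambda>P (\<omega> :: idx \<Rightarrow> bool \<times> real). K P + (\<Sum>t\<in>I. if fst (\<omega> t) then al P t + be P t * snd (\<omega> t) else 0))"
  define S where "S = (\<lambda>\<omega>. \<Sum>P\<in>Cand. exp (Wf P \<omega>))"
  define Rest where "Rest = (\<lambda>\<omega> :: idx \<Rightarrow> bool \<times> real. (\<Sum>t\<in>I. if fst (\<omega> t) then (qq t)\<^sup>2 / (2 * \<sigma>\<^sup>2) else 0) + lam * real (l0norm r n2 n3 BQ))"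
  define F where "F = (\<lambda>\<omega>. frob_sq n1 n2 n3
              (\<lambda>i j k. est (Omega_of n1 n2 n3 \<omega>) (Y_of n1 n2 n3 \<sigma> Xs \<omega>) i j k - Xs i j k))"
  have finI: "finite I" unfolding I_def index_set_def by simp
  have finEA: "finite EA" and finEB: "finite EB" unfolding EA_def EB_def by simp_all
  have finCA: "finite CA" unfolding CA_def using finEA by (simp add: finite_PiE finite_levels)
  have finCB: "finite CB" unfolding CB_def using finEB by (simp add: finite_PiE finite_levels)
  have finCand: "finite Cand" unfolding Cand_def using finCA finCB by simp
  have a_pos: "a > 0" unfolding a_def using g c sg s by (simp add: field_simps)
  have T_ge1: "T \<ge> 1"
  proof -
    have "1 \<le> real \<theta> ^ (n1 * r * n3)" using th by simp
    moreover have "1 \<le> exp (real (r * n2 * n3) * real \<theta> * exp (- (s * lam)) + 3 * \<gamma> * s\<^sup>2 * Q / \<sigma>\<^sup>2)"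
      unfolding Q_def using g by (intro one_le_exp_iff[THEN iffD2] add_nonneg_nonneg divide_nonneg_nonneg mult_nonneg_nonneg sum_nonneg) auto
    ultimately have "1 * 1 \<le> real \<theta> ^ (n1 * r * n3) * exp (real (r * n2 * n3) * real \<theta> * exp (- (s * lam)) + 3 * \<gamma> * s\<^sup>2 * Q / \<sigma>\<^sup>2)"
      by (intro mult_mono) auto
    then show ?thesis unfolding T_def by simp
  qed
  have T_pos: "T > 0" using T_ge1 by simp
  have QI: "Q = (\<Sum>t\<in>I. (qq t)\<^sup>2)" unfolding Q_def I_def qq_def
    by (intro sum.cong refl) (auto split: prod.splits)
  have pw: "a * F \<omega> \<le> ln T + S \<omega> / T + s * Rest \<omega>" for \<omega>
  proof -
    define Om where "Om = Omega_of n1 n2 n3 \<omega>"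
    define Y where "Y = Y_of n1 n2 n3 \<sigma> Xs \<omega>"
    define ep where "ep = (\<lambda>t. snd (\<omega> t))"
    have OmI: "Om \<subseteq> index_set n1 n2 n3" unfolding Om_def Omega_of_def by auto
    have Om_eq: "Om = {t \<in> I. fst (\<omega> t)}" unfolding Om_def Omega_of_def I_def by simp
    obtain A B where fAB: "feasible n1 n2 n3 r \<theta> b c A B" and eAB: "est Om Y = tprod r n3 A B"
       and minAB: "objective r n2 n3 \<sigma> lam Om Y A B \<le> objective r n2 n3 \<sigma> lam Om Y AQ BQ"
      using est OmI fQ unfolding is_pml_estimator_def by blast
    define gA where "gA = restrict (\<lambda>t. A (fst t) (fst (snd t)) (snd (snd t))) EA"
    define gB where "gB = restrict (\<lambda>t. B (fst t) (fst (snd t)) (snd (snd t))) EB"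
    define P where "P = (gA, gB)"
    have tp: "tprod r n3 (ten gA) (ten gB) i j k = tprod r n3 A B i j k" if "i < n1" "j < n2" for i j k
      by (rule tprod_cong) (use n3 that in \<open>auto simp: ten_def gA_def gB_def EA_def EB_def\<close>)
    have l0: "l0norm r n2 n3 (ten gB) = l0norm r n2 n3 B"
      unfolding l0norm_def ten_def gB_def EB_def by (rule arg_cong[where f=card]) auto
    have ddP: "dd P t = tprod r n3 A B (fst t) (fst (snd t)) (snd (snd t)) - Xs (fst t) (fst (snd t)) (snd (snd t))"
      if "t \<in> I" for t
      using that tp unfolding dd_def P_def I_def index_set_def by auto
    have gA_in: "gA \<in> CA" unfolding CA_def gA_def
      using fAB unfolding feasible_def LSet_def EA_def by auto
    have zero_lev: "0 \<in> levels 0 b \<theta>" unfolding levels_def using th by force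
    have gB_in: "gB \<in> CB" unfolding CB_def gB_def
      using fAB zero_lev unfolding feasible_def DSet_def EB_def by (auto simp: PiE_iff) (metis)
    have dd_c: "\<bar>dd P t\<bar> \<le> c" if tI: "t \<in> I" for t
    proof -
      obtain i j k where t: "t = (i, j, k)" "i < n1" "j < n2" "k < n3"
        using tI unfolding I_def index_set_def by (cases t) auto
      then show ?thesis using ddP[OF tI] fAB Xs unfolding feasible_def by force
    qed
    have PC: "P \<in> Cand" unfolding Cand_def P_def using gA_in gB_in dd_c P_def by auto
    have Fsum: "F \<omega> = (\<Sum>t\<in>I. (dd P t)\<^sup>2)"
      unfolding F_def frob_sq_sum Om_def[symmetric] Y_def[symmetric] I_def[symmetric] eAB
      by (intro sum.cong refl) (auto simp: ddP)
    have Yt: "Y t = Xs (fst t) (fst (snd t)) (snd (snd t)) + \<sigma> * ep t" if "t \<in> Om" for t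
      using that unfolding Y_def Y_of_def Om_def ep_def by (auto split: prod.splits)
    have objeq: "objective r n2 n3 \<sigma> lam Om Y A' B' = (\<Sum>t\<in>Om. ln (sqrt (2 * pi * \<sigma>\<^sup>2)) +
        (Y t - tprod r n3 A' B' (fst t) (fst (snd t)) (snd (snd t)))\<^sup>2 / (2 * \<sigma>\<^sup>2)) + lam * real (l0norm r n2 n3 B')" for A' B'
      unfolding objective_def neg_loglik_eq[OF sg] ..
    define Xd where "Xd = (\<Sum>t\<in>I. if fst (\<omega> t) then (\<sigma> * ep t - dd P t)\<^sup>2 / (2 * \<sigma>\<^sup>2) else 0)"
    define Xq where "Xq = (\<Sum>t\<in>I. if fst (\<omega> t) then (\<sigma> * ep t - qq t)\<^sup>2 / (2 * \<sigma>\<^sup>2) else 0)"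
    have sumOm: "(\<Sum>t\<in>Om. f t) = (\<Sum>t\<in>I. if fst (\<omega> t) then f t else 0)" for f :: "idx \<Rightarrow> real"
      unfolding Om_eq using finI by (rule sum.inter_filter)
    have objA: "objective r n2 n3 \<sigma> lam Om Y A B = real (card Om) * ln (sqrt (2 * pi * \<sigma>\<^sup>2)) + Xd + lam * real (l0norm r n2 n3 B)"
    proof -
      have "(\<Sum>t\<in>Om. ln (sqrt (2 * pi * \<sigma>\<^sup>2)) + (Y t - tprod r n3 A B (fst t) (fst (snd t)) (snd (snd t)))\<^sup>2 / (2 * \<sigma>\<^sup>2))
          = (\<Sum>t\<in>Om. ln (sqrt (2 * pi * \<sigma>\<^sup>2)) + (\<sigma> * ep t - dd P t)\<^sup>2 / (2 * \<sigma>\<^sup>2))"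
      proof (intro sum.cong refl)
        fix t assume t: "t \<in> Om"
        then have tI: "t \<in> I" using OmI I_def by auto
        show "ln (sqrt (2 * pi * \<sigma>\<^sup>2)) + (Y t - tprod r n3 A B (fst t) (fst (snd t)) (snd (snd t)))\<^sup>2 / (2 * \<sigma>\<^sup>2)
          = ln (sqrt (2 * pi * \<sigma>\<^sup>2)) + (\<sigma> * ep t - dd P t)\<^sup>2 / (2 * \<sigma>\<^sup>2)"
        proof -
          have "Y t - tprod r n3 A B (fst t) (fst (snd t)) (snd (snd t)) = \<sigma> * ep t - dd P t"
            using Yt[OF t] ddP[OF tI] by linarith
          then show ?thesis by simp
        qed
      qed
      also have "\<dots> = real (card Om) * ln (sqrt (2 * pi * \<sigma>\<^sup>2)) + Xd"
        unfolding Xd_def sum.distrib sumOm[symmetric] by simp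
      finally show ?thesis unfolding objeq by simp
    qed
    have objQ: "objective r n2 n3 \<sigma> lam Om Y AQ BQ = real (card Om) * ln (sqrt (2 * pi * \<sigma>\<^sup>2)) + Xq + lam * real (l0norm r n2 n3 BQ)"
    proof -
      have "(\<Sum>t\<in>Om. ln (sqrt (2 * pi * \<sigma>\<^sup>2)) + (Y t - tprod r n3 AQ BQ (fst t) (fst (snd t)) (snd (snd t)))\<^sup>2 / (2 * \<sigma>\<^sup>2))
          = (\<Sum>t\<in>Om. ln (sqrt (2 * pi * \<sigma>\<^sup>2)) + (\<sigma> * ep t - qq t)\<^sup>2 / (2 * \<sigma>\<^sup>2))"
      proof (intro sum.cong refl)
        fix t assume t: "t \<in> Om"
        show "ln (sqrt (2 * pi * \<sigma>\<^sup>2)) + (Y t - tprod r n3 AQ BQ (fst t) (fst (snd t)) (snd (snd t)))\<^sup>2 / (2 * \<sigma>\<^sup>2)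
          = ln (sqrt (2 * pi * \<sigma>\<^sup>2)) + (\<sigma> * ep t - qq t)\<^sup>2 / (2 * \<sigma>\<^sup>2)"
        proof -
          have "Y t - tprod r n3 AQ BQ (fst t) (fst (snd t)) (snd (snd t)) = \<sigma> * ep t - qq t"
            using Yt[OF t] unfolding qq_def by linarith
          then show ?thesis by simp
        qed
      qed
      also have "\<dots> = real (card Om) * ln (sqrt (2 * pi * \<sigma>\<^sup>2)) + Xq"
        unfolding Xq_def sum.distrib sumOm[symmetric] by simp
      finally show ?thesis unfolding objeq by simp
    qed
    have key: "Xd + lam * real (l0norm r n2 n3 B) \<le> Xq + lam * real (l0norm r n2 n3 BQ)"
      using minAB objA objQ by simp
    have ident: "(if fst (\<omega> t) then al P t + be P t * ep t else 0) + s * (if fst (\<omega> t) then (qq t)\<^sup>2 / (2 * \<sigma>\<^sup>2) else 0)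
        = s * ((if fst (\<omega> t) then (\<sigma> * ep t - qq t)\<^sup>2 / (2 * \<sigma>\<^sup>2) else 0) - (if fst (\<omega> t) then (\<sigma> * ep t - dd P t)\<^sup>2 / (2 * \<sigma>\<^sup>2) else 0))" for t
      unfolding al_def be_def using sg by (simp add: field_simps power2_eq_square)
    have sumid: "(\<Sum>t\<in>I. if fst (\<omega> t) then al P t + be P t * ep t else 0) + s * (\<Sum>t\<in>I. if fst (\<omega> t) then (qq t)\<^sup>2 / (2 * \<sigma>\<^sup>2) else 0)
        = s * (Xq - Xd)"
      unfolding Xq_def Xd_def sum_distrib_left sum.distrib[symmetric] sum_subtractf[symmetric] ident ..
    have c1: "a * F \<omega> \<le> Wf P \<omega> + s * Rest \<omega>"
    proof -
      have "0 \<le> s * ((Xq + lam * real (l0norm r n2 n3 BQ)) - (Xd + lam * real (l0norm r n2 n3 B)))"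
        using key s by simp
      moreover have "Wf P \<omega> + s * Rest \<omega> - a * F \<omega> = s * ((Xq + lam * real (l0norm r n2 n3 BQ)) - (Xd + lam * real (l0norm r n2 n3 B)))"
        unfolding Wf_def K_def Rest_def Fsum using sumid l0 unfolding P_def ep_def
        by (simp add: algebra_simps)
      ultimately show ?thesis by simp
    qed
    have Spos: "S \<omega> > 0"
    proof -
      have "exp (Wf P \<omega>) \<le> S \<omega>" unfolding S_def
        using PC finCand by (intro member_le_sum) auto
      then show ?thesis by (meson exp_gt_zero less_le_trans)
    qed
    have c2: "Wf P \<omega> \<le> ln (S \<omega>)"
    proof -
      have "exp (Wf P \<omega>) \<le> S \<omega>" unfolding S_def
        using PC finCand by (intro member_le_sum) auto
      then show ?thesis using Spos by (metis exp_gt_zero ln_exp ln_le_cancel_iff)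
    qed
    have c3: "ln (S \<omega>) \<le> ln T + S \<omega> / T - 1"
    proof -
      have "ln (S \<omega> / T) \<le> S \<omega> / T - 1" using Spos T_pos by (intro ln_le_minus_one) simp
      then show ?thesis using Spos T_pos by (simp add: ln_div)
    qed
    show ?thesis using c1 c2 c3 by linarith
  qed
  define G where "G = 3 * \<gamma> * s\<^sup>2 * Q / \<sigma>\<^sup>2"
  define h where "h = (\<lambda>P t (z :: bool \<times> real). ennreal (if fst z then exp (al P t + be P t * snd z) else 1))"
  have expW: "ennreal (exp (Wf P \<omega>)) = ennreal (exp (K P)) * (\<Prod>t\<in>I. h P t (\<omega> t))" for P \<omega>
  proof -
    have "exp (Wf P \<omega>) = exp (K P) * (\<Prod>t\<in>I. exp (if fst (\<omega> t) then al P t + be P t * snd (\<omega> t) else 0))"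
      unfolding Wf_def by (simp add: exp_add exp_sum finI)
    also have "\<dots> = exp (K P) * (\<Prod>t\<in>I. (if fst (\<omega> t) then exp (al P t + be P t * snd (\<omega> t)) else 1))"
      by (intro arg_cong2[where f="(*)"] prod.cong refl) auto
    finally have e: "exp (Wf P \<omega>) = exp (K P) * (\<Prod>t\<in>I. (if fst (\<omega> t) then exp (al P t + be P t * snd (\<omega> t)) else 1))" .
    have pn: "0 \<le> (\<Prod>t\<in>I. (if fst (\<omega> t) then exp (al P t + be P t * snd (\<omega> t)) else 1))"
      by (intro prod_nonneg) auto
    show ?thesis unfolding h_def e
      by (subst prod_ennreal) (auto simp: ennreal_mult[OF _ pn])
  qed
  have intP: "(\<integral>\<^sup>+ \<omega>. ennreal (exp (Wf P \<omega>)) \<partial>PiM I (\<lambda>_. M0 \<gamma>))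
      = ennreal (exp (K P) * (\<Prod>t\<in>I. 1 - \<gamma> + \<gamma> * exp (al P t + (be P t)\<^sup>2 / 2)))" for P
  proof -
    have "(\<integral>\<^sup>+ \<omega>. ennreal (exp (Wf P \<omega>)) \<partial>PiM I (\<lambda>_. M0 \<gamma>))
        = ennreal (exp (K P)) * (\<integral>\<^sup>+ \<omega>. (\<Prod>t\<in>I. h P t (\<omega> t)) \<partial>PiM I (\<lambda>_. M0 \<gamma>))"
      unfolding expW by (rule nn_integral_cmult) (intro meas_prod_comp finI, simp add: h_def)
    also have "(\<integral>\<^sup>+ \<omega>. (\<Prod>t\<in>I. h P t (\<omega> t)) \<partial>PiM I (\<lambda>_. M0 \<gamma>)) = (\<Prod>t\<in>I. \<integral>\<^sup>+ z. h P t z \<partial>M0 \<gamma>)"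
      by (rule prod_PiM_M0[OF finI]) (simp add: h_def)
    also have "\<dots> = (\<Prod>t\<in>I. ennreal (1 - \<gamma> + \<gamma> * exp (al P t + (be P t)\<^sup>2 / 2)))"
      unfolding h_def using g by (intro prod.cong refl nnint_M0_exp) auto
    also have "\<dots> = ennreal (\<Prod>t\<in>I. 1 - \<gamma> + \<gamma> * exp (al P t + (be P t)\<^sup>2 / 2))"
      using g by (intro prod_ennreal) (simp add: add_nonneg_nonneg)
    finally show ?thesis using g by (simp add: ennreal_mult prod_nonneg add_nonneg_nonneg)
  qed
  have bndP: "exp (K P) * (\<Prod>t\<in>I. 1 - \<gamma> + \<gamma> * exp (al P t + (be P t)\<^sup>2 / 2))
      \<le> exp (- (s * lam * real (l0norm r n2 n3 (ten (snd P)))) + G)" if P: "P \<in> Cand" for P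
  proof -
    have "(\<Prod>t\<in>I. 1 - \<gamma> + \<gamma> * exp (al P t + (be P t)\<^sup>2 / 2))
        \<le> (\<Prod>t\<in>I. exp (- a * (dd P t)\<^sup>2 + 2 * \<gamma> * (3 * s\<^sup>2 * (qq t)\<^sup>2 / (2 * \<sigma>\<^sup>2))))"
    proof (intro prod_mono conjI)
      fix t assume t: "t \<in> I"
      show "0 \<le> 1 - \<gamma> + \<gamma> * exp (al P t + (be P t)\<^sup>2 / 2)" using g by simp
      have dc: "\<bar>dd P t\<bar> \<le> c" using P t unfolding Cand_def by auto
      have vq: "3 * s\<^sup>2 * (qq t)\<^sup>2 / (2 * \<sigma>\<^sup>2) \<le> 1"
        using qv t unfolding qq_def I_def index_set_def by auto
      show "1 - \<gamma> + \<gamma> * exp (al P t + (be P t)\<^sup>2 / 2) \<le> exp (- a * (dd P t)\<^sup>2 + 2 * \<gamma> * (3 * s\<^sup>2 * (qq t)\<^sup>2 / (2 * \<sigma>\<^sup>2)))"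
        using per_t[OF less_imp_le[OF g(1)] g(2) sg s c dc vq] unfolding al_def be_def a_def by simp
    qed
    also have "\<dots> = exp (- a * (\<Sum>t\<in>I. (dd P t)\<^sup>2) + G)"
      unfolding G_def QI using finI
      by (simp add: exp_sum[symmetric] sum.distrib sum_distrib_left sum_divide_distrib power2_eq_square mult.assoc sum_subtractf sum_negf)
    finally have "exp (K P) * (\<Prod>t\<in>I. 1 - \<gamma> + \<gamma> * exp (al P t + (be P t)\<^sup>2 / 2))
        \<le> exp (K P) * exp (- a * (\<Sum>t\<in>I. (dd P t)\<^sup>2) + G)" by (intro mult_left_mono) auto
    also have "\<dots> = exp (- (s * lam * real (l0norm r n2 n3 (ten (snd P)))) + G)"
      unfolding K_def by (simp add: exp_add[symmetric])
    finally show ?thesis .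
  qed
  have l0ten: "l0norm r n2 n3 (ten gB) = card {e \<in> EB. gB e \<noteq> 0}" for gB
    unfolding l0norm_def EB_def ten_def by (rule arg_cong[where f=card]) auto
  have ES: "(\<integral>\<^sup>+ \<omega>. ennreal (S \<omega>) \<partial>sample_space n1 n2 n3 \<gamma>) \<le> ennreal T"
  proof -
    have "(\<integral>\<^sup>+ \<omega>. ennreal (S \<omega>) \<partial>PiM I (\<lambda>_. M0 \<gamma>)) = (\<integral>\<^sup>+ \<omega>. (\<Sum>P\<in>Cand. ennreal (exp (Wf P \<omega>))) \<partial>PiM I (\<lambda>_. M0 \<gamma>))"
      unfolding S_def by (intro nn_integral_cong) (simp add: sum_ennreal)
    also have "\<dots> = (\<Sum>P\<in>Cand. \<integral>\<^sup>+ \<omega>. ennreal (exp (Wf P \<omega>)) \<partial>PiM I (\<lambda>_. M0 \<gamma>))"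
    proof (rule nn_integral_sum)
      fix P
      have "(\<lambda>\<omega>. Wf P \<omega>) \<in> borel_measurable (PiM I (\<lambda>_. M0 \<gamma>))"
        unfolding Wf_def by (intro borel_measurable_add borel_measurable_const borel_measurable_sum meas_comp_real) auto
      then show "(\<lambda>\<omega>. ennreal (exp (Wf P \<omega>))) \<in> borel_measurable (PiM I (\<lambda>_. M0 \<gamma>))" by measurable
    qed
    also have "\<dots> = (\<Sum>P\<in>Cand. ennreal (exp (K P) * (\<Prod>t\<in>I. 1 - \<gamma> + \<gamma> * exp (al P t + (be P t)\<^sup>2 / 2))))"
      by (simp add: intP)
    also have "\<dots> = ennreal (\<Sum>P\<in>Cand. exp (K P) * (\<Prod>t\<in>I. 1 - \<gamma> + \<gamma> * exp (al P t + (be P t)\<^sup>2 / 2)))"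
      using g by (intro sum_ennreal) (auto intro!: mult_nonneg_nonneg prod_nonneg add_nonneg_nonneg)
    also have "\<dots> \<le> ennreal (\<Sum>P\<in>Cand. exp (- (s * lam * real (l0norm r n2 n3 (ten (snd P)))) + G))"
      by (intro ennreal_leI sum_mono bndP)
    also have "\<dots> \<le> ennreal (\<Sum>P\<in>CA \<times> CB. exp (- (s * lam * real (l0norm r n2 n3 (ten (snd P)))) + G))"
      by (intro ennreal_leI sum_mono2) (auto simp: Cand_def finCA finCB)
    also have "(\<Sum>P\<in>CA \<times> CB. exp (- (s * lam * real (l0norm r n2 n3 (ten (snd P)))) + G))
        = real (card CA) * ((\<Sum>gB\<in>CB. exp (- (s * lam) * real (card {e \<in> EB. gB e \<noteq> 0}))) * exp G)"
    proof -
      define f where "f = (\<lambda>gB. exp (- (s * lam * real (l0norm r n2 n3 (ten gB))) + G))"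
      have "(\<Sum>P\<in>CA \<times> CB. f (snd P)) = (\<Sum>x\<in>CA. \<Sum>y\<in>CB. f y)"
        by (subst sum.cartesian_product) (simp add: split_def)
      also have "\<dots> = real (card CA) * (\<Sum>y\<in>CB. f y)" by simp
      also have "(\<Sum>y\<in>CB. f y) = (\<Sum>gB\<in>CB. exp (- (s * lam) * real (card {e \<in> EB. gB e \<noteq> 0}))) * exp G"
        unfolding f_def l0ten sum_distrib_right by (intro sum.cong refl) (simp add: exp_add[symmetric])
      finally show ?thesis unfolding f_def by simp
    qed
    also have "\<dots> \<le> real \<theta> ^ (n1 * r * n3) * (exp (real (r * n2 * n3) * real \<theta> * exp (- (s * lam))) * exp G)"
    proof (rule mult_mono)
      show "real (card CA) \<le> real \<theta> ^ (n1 * r * n3)"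
        unfolding CA_def using card_PiE_levels[OF finEA, of 0 1 \<theta>] by (simp add: EA_def mult.assoc)
      have "(\<Sum>gB\<in>CB. exp (- (s * lam) * real (card {e \<in> EB. gB e \<noteq> 0}))) \<le> exp (real (card EB) * real \<theta> * exp (- (s * lam)))"
        unfolding CB_def using s lam by (intro sum_PiE_weight finEB) auto
      then have "(\<Sum>gB\<in>CB. exp (- (s * lam) * real (card {e \<in> EB. gB e \<noteq> 0})))
          \<le> exp (real (r * n2 * n3) * real \<theta> * exp (- (s * lam)))"
        by (simp add: EB_def mult.assoc)
      then show "(\<Sum>gB\<in>CB. exp (- (s * lam) * real (card {e \<in> EB. gB e \<noteq> 0}))) * exp G
          \<le> exp (real (r * n2 * n3) * real \<theta> * exp (- (s * lam))) * exp G"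
        by (rule mult_right_mono) simp
    qed (auto intro!: sum_nonneg mult_nonneg_nonneg)
    also have "\<dots> = T" unfolding T_def G_def by (simp add: exp_add)
    finally show ?thesis unfolding sample_space_def I_def using ennreal_leI by blast
  qed
  have Q0: "Q \<ge> 0" unfolding QI by (intro sum_nonneg) auto
  have ER: "(\<integral>\<^sup>+ \<omega>. ennreal (Rest \<omega>) \<partial>sample_space n1 n2 n3 \<gamma>) = ennreal (\<gamma> * Q / (2 * \<sigma>\<^sup>2) + lam * real (l0norm r n2 n3 BQ))"
  proof -
    interpret P: prob_space "PiM I (\<lambda>_. M0 \<gamma>)" by (intro prob_space_PiM prob_M0)
    have eq: "ennreal (Rest \<omega>) = (\<Sum>t\<in>I. ennreal (if fst (\<omega> t) then (qq t)\<^sup>2 / (2 * \<sigma>\<^sup>2) else 0)) + ennreal (lam * real (l0norm r n2 n3 BQ))" for \<omega>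
      unfolding Rest_def using lam by (subst ennreal_plus) (auto intro!: sum_nonneg)
    have "(\<integral>\<^sup>+ \<omega>. ennreal (Rest \<omega>) \<partial>PiM I (\<lambda>_. M0 \<gamma>)) =
        (\<integral>\<^sup>+ \<omega>. (\<Sum>t\<in>I. ennreal (if fst (\<omega> t) then (qq t)\<^sup>2 / (2 * \<sigma>\<^sup>2) else 0)) \<partial>PiM I (\<lambda>_. M0 \<gamma>))
        + ennreal (lam * real (l0norm r n2 n3 BQ))"
      unfolding eq by (subst nn_integral_add) (auto intro!: meas_sum_comp finI simp: P.emeasure_space_1)
    also have "(\<integral>\<^sup>+ \<omega>. (\<Sum>t\<in>I. ennreal (if fst (\<omega> t) then (qq t)\<^sup>2 / (2 * \<sigma>\<^sup>2) else 0)) \<partial>PiM I (\<lambda>_. M0 \<gamma>))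
        = (\<Sum>t\<in>I. \<integral>\<^sup>+ z. ennreal (if fst z then (qq t)\<^sup>2 / (2 * \<sigma>\<^sup>2) else 0) \<partial>M0 \<gamma>)"
      by (rule sum_PiM_M0[OF finI]) simp
    also have "\<dots> = (\<Sum>t\<in>I. ennreal (\<gamma> * ((qq t)\<^sup>2 / (2 * \<sigma>\<^sup>2))))"
      using g by (intro sum.cong refl nnint_M0_ind) auto
    also have "\<dots> = ennreal (\<gamma> * Q / (2 * \<sigma>\<^sup>2))"
      using g by (subst sum_ennreal) (auto simp: QI sum_distrib_left sum_divide_distrib)
    finally show ?thesis unfolding sample_space_def I_def[symmetric] using g lam Q0
      by (subst ennreal_plus) auto
  qed
  have measS: "(\<lambda>\<omega>. ennreal (S \<omega>)) \<in> borel_measurable (sample_space n1 n2 n3 \<gamma>)"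
  proof -
    have "(\<lambda>\<omega>. S \<omega>) \<in> borel_measurable (PiM I (\<lambda>_. M0 \<gamma>))"
      unfolding S_def Wf_def
      by (intro borel_measurable_exp borel_measurable_add borel_measurable_const borel_measurable_sum meas_comp_real) auto
    then show ?thesis unfolding sample_space_def I_def by simp
  qed
  have measR: "(\<lambda>\<omega>. ennreal (Rest \<omega>)) \<in> borel_measurable (sample_space n1 n2 n3 \<gamma>)"
  proof -
    have "(\<lambda>\<omega>. Rest \<omega>) \<in> borel_measurable (PiM I (\<lambda>_. M0 \<gamma>))"
      unfolding Rest_def
      by (intro borel_measurable_add borel_measurable_const borel_measurable_sum meas_comp_real) auto
    then show ?thesis unfolding sample_space_def I_def by simp
  qed
  have S0: "S \<omega> \<ge> 0" for \<omega> unfolding S_def by (intro sum_nonneg) auto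
  have R0: "Rest \<omega> \<ge> 0" for \<omega> unfolding Rest_def using lam by (intro add_nonneg_nonneg sum_nonneg) auto
  have lnT0: "ln T \<ge> 0" using T_ge1 by simp
  have "(\<integral>\<^sup>+ \<omega>. ennreal (F \<omega>) \<partial>sample_space n1 n2 n3 \<gamma>) \<le>
        (\<integral>\<^sup>+ \<omega>. ennreal (1 / a) * (ennreal (ln T) + ennreal (1 / T) * ennreal (S \<omega>) + ennreal s * ennreal (Rest \<omega>)) \<partial>sample_space n1 n2 n3 \<gamma>)"
  proof (intro nn_integral_mono)
    fix \<omega>
    have "F \<omega> \<le> (1 / a) * (ln T + (1 / T) * S \<omega> + s * Rest \<omega>)"
      using pw[of \<omega>] a_pos by (simp add: field_simps)
    then have "ennreal (F \<omega>) \<le> ennreal ((1 / a) * (ln T + (1 / T) * S \<omega> + s * Rest \<omega>))"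
      by (rule ennreal_leI)
    also have "\<dots> = ennreal (1 / a) * (ennreal (ln T) + ennreal (1 / T) * ennreal (S \<omega>) + ennreal s * ennreal (Rest \<omega>))"
      using a_pos T_pos lnT0 S0[of \<omega>] R0[of \<omega>] s
      apply (subst ennreal_mult, simp, simp)
      apply (subst ennreal_plus, simp, simp)
      apply (subst ennreal_plus, simp, simp)
      apply (subst ennreal_mult, simp, simp)
      apply (subst ennreal_mult, simp, simp)
      apply (rule refl)
      done
    finally show "ennreal (F \<omega>) \<le> ennreal (1 / a) * (ennreal (ln T) + ennreal (1 / T) * ennreal (S \<omega>) + ennreal s * ennreal (Rest \<omega>))" .
  qed
  also have "\<dots> = ennreal (1 / a) * (ennreal (ln T) + ennreal (1 / T) * (\<integral>\<^sup>+ \<omega>. ennreal (S \<omega>) \<partial>sample_space n1 n2 n3 \<gamma>)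
       + ennreal s * (\<integral>\<^sup>+ \<omega>. ennreal (Rest \<omega>) \<partial>sample_space n1 n2 n3 \<gamma>))"
  proof -
    interpret P: prob_space "sample_space n1 n2 n3 \<gamma>"
      unfolding sample_space_def by (intro prob_space_PiM prob_M0)
    show ?thesis
      using measS measR
      by (simp add: nn_integral_cmult nn_integral_add P.emeasure_space_1)
  qed
  also have "\<dots> \<le> ennreal (1 / a) * (ennreal (ln T) + ennreal (1 / T) * ennreal T
       + ennreal s * ennreal (\<gamma> * Q / (2 * \<sigma>\<^sup>2) + lam * real (l0norm r n2 n3 BQ)))"
    using ES ER by (intro mult_left_mono add_mono order_refl) auto
  also have "\<dots> = ennreal ((ln T + 1 + s * (\<gamma> * Q / (2 * \<sigma>\<^sup>2) + lam * real (l0norm r n2 n3 BQ))) / a)"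
  proof -
    have q0: "0 \<le> \<gamma> * Q / (2 * \<sigma>\<^sup>2) + lam * real (l0norm r n2 n3 BQ)"
      unfolding Q_def using g lam by (intro add_nonneg_nonneg mult_nonneg_nonneg divide_nonneg_nonneg sum_nonneg) auto
    define Z where "Z = \<gamma> * Q / (2 * \<sigma>\<^sup>2) + lam * real (l0norm r n2 n3 BQ)"
    have z0: "0 \<le> Z" using q0 unfolding Z_def .
    have "ennreal (1 / T) * ennreal T = 1" using T_pos by (simp flip: ennreal_mult)
    moreover have "(ln T + 1 + s * Z) / a = (1 / a) * (ln T + 1 + s * Z)" by simp
    moreover have "ennreal ((1 / a) * (ln T + 1 + s * Z)) = ennreal (1 / a) * (ennreal (ln T) + 1 + ennreal s * ennreal Z)"
      using a_pos lnT0 z0 s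
      apply (subst ennreal_mult, simp, simp)
      apply (subst ennreal_plus, simp, simp)
      apply (subst ennreal_plus, simp, simp)
      apply (subst ennreal_mult, simp, simp)
      apply simp
      done
    ultimately show ?thesis unfolding Z_def[symmetric] by simp
  qed
  finally show ?thesis unfolding F_def .
qed

lemma theta_bounds:
  fixes \<beta> :: real and n :: nat
  assumes "\<beta> \<ge> 3" "n \<ge> 2"
  defines "L \<equiv> ln (real n)"
  shows "real (2 ^ nat \<lceil>\<beta> * log 2 (real n)\<rceil> :: nat) \<ge> exp (\<beta> * L)"
    "real (2 ^ nat \<lceil>\<beta> * log 2 (real n)\<rceil> :: nat) \<le> 2 * exp (\<beta> * L)"
    "ln (real (2 ^ nat \<lceil>\<beta> * log 2 (real n)\<rceil> :: nat)) \<le> \<beta> * L + ln 2"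
proof -
  define k where "k = nat \<lceil>\<beta> * log 2 (real n)\<rceil>"
  have L0: "L > 0" unfolding L_def using assms by simp
  have l2: "ln (2::real) > 0" by simp
  have lg: "log 2 (real n) = L / ln 2" unfolding L_def log_def by simp
  have pos: "\<beta> * log 2 (real n) \<ge> 0" using assms L0 lg by simp
  have c0: "0 \<le> \<lceil>\<beta> * log 2 (real n)\<rceil>" using pos by simp
  have kk: "real k = of_int \<lceil>\<beta> * log 2 (real n)\<rceil>" unfolding k_def using c0 by simp
  have k1: "real k \<ge> \<beta> * L / ln 2" unfolding kk using le_of_int_ceiling[of "\<beta> * log 2 (real n)"] lg by simp
  have k2: "real k \<le> \<beta> * L / ln 2 + 1" unfolding kk using ceiling_correct[of "\<beta> * log 2 (real n)"] lg by simp
  have th: "real (2 ^ k :: nat) = exp (real k * ln 2)"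
    by (simp add: exp_of_nat_mult)
  show "real (2 ^ nat \<lceil>\<beta> * log 2 (real n)\<rceil> :: nat) \<ge> exp (\<beta> * L)"
    unfolding k_def[symmetric] th using k1 l2 by (simp add: field_simps)
  have "real k * ln 2 \<le> \<beta> * L + ln 2" using k2 l2 by (simp add: field_simps)
  then show "real (2 ^ nat \<lceil>\<beta> * log 2 (real n)\<rceil> :: nat) \<le> 2 * exp (\<beta> * L)"
  proof -
    have "exp (real k * ln 2) \<le> exp (\<beta> * L + ln 2)" using \<open>real k * ln 2 \<le> \<beta> * L + ln 2\<close> by simp
    also have "\<dots> = 2 * exp (\<beta> * L)" by (simp add: exp_add)
    finally show ?thesis unfolding k_def[symmetric] th .
  qed
  show "ln (real (2 ^ nat \<lceil>\<beta> * log 2 (real n)\<rceil> :: nat)) \<le> \<beta> * L + ln 2"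
    unfolding k_def[symmetric] th using \<open>real k * ln 2 \<le> \<beta> * L + ln 2\<close> by simp
qed

theorem proposition1:
  fixes n1 n2 n3 r m :: nat and b c \<sigma> :: real
    and As Bs :: tensor
    and est :: "idx set \<Rightarrow> (idx \<Rightarrow> real) \<Rightarrow> tensor"
  assumes "n1 \<ge> 2" "n2 \<ge> 2" "n3 \<ge> 2" "r \<le> min n1 n2"
    and "b > 0" "c > 0" "\<sigma> > 0"
    and "\<forall>i<n1. \<forall>l<r. \<forall>k<n3. 0 \<le> As i l k \<and> As i l k \<le> 1"
    and "\<forall>l<r. \<forall>j<n2. \<forall>k<n3. 0 \<le> Bs l j k \<and> Bs l j k \<le> b"
    and "\<forall>i<n1. \<forall>j<n2. \<forall>k<n3. 0 \<le> tprod r n3 As Bs i j k \<and> tprod r n3 As Bs i j k \<le> c / 2"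
    and "4 \<le> m" "m \<le> n1 * n2 * n3"
  defines "Xs \<equiv> tprod r n3 As Bs"
    and "\<gamma> \<equiv> real m / real (n1 * n2 * n3)"
    and "\<beta> \<equiv> max 3 (1 + ln (3 * real r * real n3 powr 1.5 * b / c) / ln (real (max n1 n2)))"
    and "\<kappa> \<equiv> c\<^sup>2 / (2 * \<sigma>\<^sup>2)"
  defines "lam \<equiv> 4 * (\<beta> + 2) * (1 + 2 * \<kappa> / 3) * ln (real (max n1 n2))"
  assumes "is_pml_estimator n1 n2 n3 r (quant_levels \<beta> n1 n2) b c \<sigma> lam est"
    and "(\<lambda>\<omega>. frob_sq n1 n2 n3 (\<lambda>i j k. est (Omega_of n1 n2 n3 \<omega>) (Y_of n1 n2 n3 \<sigma> Xs \<omega>) i j k - Xs i j k))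
           \<in> borel_measurable (sample_space n1 n2 n3 \<gamma>)"
  shows "(\<integral>\<^sup>+ \<omega>. ennreal (frob_sq n1 n2 n3
              (\<lambda>i j k. est (Omega_of n1 n2 n3 \<omega>) (Y_of n1 n2 n3 \<sigma> Xs \<omega>) i j k - Xs i j k)
              / real (n1 * n2 * n3)) \<partial>sample_space n1 n2 n3 \<gamma>)
         \<le> ennreal (22 * c\<^sup>2 * ln (real m) / real m
              + 16 * (3 * \<sigma>\<^sup>2 + 2 * c\<^sup>2) * (\<beta> + 2)
                * ((real r * real n1 * real n3 + real (l0norm r n2 n3 Bs)) / real m)
                * ln (real (max n1 n2)))"
proof -
  note hyps = assms
  have n3p: "n3 > 0" using assms(3) by simp
  define F where "F = (\<lambda>\<omega>. frob_sq n1 n2 n3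
              (\<lambda>i j k. est (Omega_of n1 n2 n3 \<omega>) (Y_of n1 n2 n3 \<sigma> Xs \<omega>) i j k - Xs i j k))"
  have F0: "F \<omega> \<ge> 0" for \<omega> unfolding F_def frob_sq_def by (intro sum_nonneg) auto
  define N where "N = real (n1 * n2 * n3)"
  have Npos: "N > 0" unfolding N_def using assms(1-3) by simp
  have LHS_eq: "(\<integral>\<^sup>+ \<omega>. ennreal (F \<omega> / real (n1 * n2 * n3)) \<partial>sample_space n1 n2 n3 \<gamma>)
      = ennreal (1 / N) * (\<integral>\<^sup>+ \<omega>. ennreal (F \<omega>) \<partial>sample_space n1 n2 n3 \<gamma>)"
  proof -
    have "(\<integral>\<^sup>+ \<omega>. ennreal (F \<omega> / real (n1 * n2 * n3)) \<partial>sample_space n1 n2 n3 \<gamma>)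
        = (\<integral>\<^sup>+ \<omega>. ennreal (1 / N) * ennreal (F \<omega>) \<partial>sample_space n1 n2 n3 \<gamma>)"
      using Npos F0 by (intro nn_integral_cong) (simp add: N_def ennreal_mult[symmetric])
    also have "\<dots> = ennreal (1 / N) * (\<integral>\<^sup>+ \<omega>. ennreal (F \<omega>) \<partial>sample_space n1 n2 n3 \<gamma>)"
      using assms(19) unfolding F_def by (intro nn_integral_cmult) measurable
    finally show ?thesis .
  qed
  show ?thesis
  proof (cases "r = 0")
    case True
    have tz: "tprod r n3 A B i j k = 0" for A B i j k using True unfolding tprod_def by simp
    have "F \<omega> = 0" for \<omega>
    proof -
      have sub: "Omega_of n1 n2 n3 \<omega> \<subseteq> index_set n1 n2 n3" unfolding Omega_of_def by auto
      obtain A B where "est (Omega_of n1 n2 n3 \<omega>) (Y_of n1 n2 n3 \<sigma> Xs \<omega>) = tprod r n3 A B"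
        using assms(18) sub unfolding is_pml_estimator_def by blast
      then show ?thesis unfolding F_def frob_sq_def Xs_def by (simp add: tz)
    qed
    then have "(\<integral>\<^sup>+ \<omega>. ennreal (F \<omega> / real (n1 * n2 * n3)) \<partial>sample_space n1 n2 n3 \<gamma>) = 0" by simp
    then show ?thesis unfolding F_def by simp
  next
    case False
    then have r1: "r \<ge> 1" by simp
    define L where "L = ln (real (max n1 n2))"
    define n where "n = real (max n1 n2)"
    define \<theta> where "\<theta> = quant_levels \<beta> n1 n2"
    define s where "s = 3 * \<sigma>\<^sup>2 / (2 * (3 * \<sigma>\<^sup>2 + c\<^sup>2))"
    define K where "K = real r * real n1 * real n3"
    define l0 where "l0 = real (l0norm r n2 n3 Bs)"
    have sg: "\<sigma> > 0" and cp: "c > 0" and bp: "b > 0" using assms by auto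
    have n2': "n \<ge> 2" unfolding n_def using assms(1) by simp
    have Lexp: "exp L = n" unfolding L_def n_def using assms(1) by simp
    have Lln2: "ln 2 \<le> L" unfolding L_def using assms(1) by simp
    have L23: "L \<ge> 2/3" using Lln2 ln2_ge_two_thirds by linarith
    have n1n: "real n1 \<le> n" and n2n: "real n2 \<le> n" unfolding n_def by auto
    have b3: "\<beta> \<ge> 3" unfolding \<beta>_def by simp
    have bx: "\<beta> \<ge> 1 + ln (3 * real r * real n3 powr 1.5 * b / c) / L" unfolding \<beta>_def L_def by simp
    have thb: "real \<theta> \<ge> exp (\<beta> * L)" "real \<theta> \<le> 2 * exp (\<beta> * L)" "ln (real \<theta>) \<le> \<beta> * L + ln 2"
      using theta_bounds[OF b3, of "max n1 n2"] assms(1) unfolding \<theta>_def quant_levels_def L_def by auto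
    have e8: "exp (\<beta> * L) \<ge> 8"
    proof -
      have "3 * ln 2 \<le> \<beta> * L" using b3 Lln2 by (intro mult_mono) auto
      then have "exp (3 * ln 2) \<le> exp (\<beta> * L)" by simp
      moreover have "exp (3 * ln (2::real)) = 8" by (simp add: exp_of_nat_mult[of 3, simplified])
      ultimately show ?thesis by simp
    qed
    have th8: "real \<theta> \<ge> 8" using thb e8 by linarith
    have th2: "\<theta> \<ge> 2" using th8 by simp
    have xle: "3 * real r * (real n3 * sqrt (real n3)) * b \<le> c * exp ((\<beta> - 1) * L)"
    proof -
      have x0: "3 * real r * real n3 powr 1.5 * b / c > 0" using r1 n3p bp cp by simp
      have "ln (3 * real r * real n3 powr 1.5 * b / c) \<le> (\<beta> - 1) * L"
        using bx L23 by (simp add: field_simps)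
      then have "3 * real r * real n3 powr 1.5 * b / c \<le> exp ((\<beta> - 1) * L)"
        using x0 by (metis exp_le_cancel_iff exp_ln)
      moreover have "real n3 powr 1.5 = real n3 * sqrt (real n3)"
      proof -
        have "real n3 powr 1.5 = real n3 powr (1 + 1/2)" by simp
        also have "\<dots> = real n3 * real n3 powr (1/2)" using n3p powr_add[of "real n3" 1 "1/2"] by simp
        finally show ?thesis by (simp add: powr_half_sqrt)
      qed
      ultimately show ?thesis using cp by (simp add: field_simps)
    qed
    obtain AQ BQ where fQ: "feasible n1 n2 n3 r \<theta> b c AQ BQ" and l0Q: "l0norm r n2 n3 BQ \<le> l0norm r n2 n3 Bs"
      and DQ: "\<forall>i<n1. \<forall>j<n2. \<forall>k<n3. 0 \<le> tprod r n3 As Bs i j k - tprod r n3 AQ BQ i j k \<and>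
        tprod r n3 As Bs i j k - tprod r n3 AQ BQ i j k \<le> real n3 * (real r * (2 * b * (1 / (real \<theta> - 1))))"
      using quantize[OF th2 bp cp n3p assms(8) assms(9) assms(10)] by blast
    define qm where "qm = real n3 * (real r * (2 * b * (1 / (real \<theta> - 1))))"
    have qm_le: "qm \<le> 4 * c / (3 * sqrt (real n3) * n)"
    proof -
      have "qm = 2 * (real r * real n3 * b) / (real \<theta> - 1)" unfolding qm_def by simp
      also have "\<dots> \<le> 2 * (real r * real n3 * b) / (real \<theta> / 2)"
        using th8 r1 bp by (intro divide_left_mono mult_pos_pos) auto
      also have "\<dots> \<le> 4 * (real r * real n3 * b) / exp (\<beta> * L)"
        using thb(1) e8 r1 bp n3p by (simp add: field_simps mult_left_mono)
      also have "exp (\<beta> * L) = exp ((\<beta> - 1) * L) * n"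
      proof -
        have "exp (\<beta> * L) = exp ((\<beta> - 1) * L + L)" by (simp add: algebra_simps)
        also have "\<dots> = exp ((\<beta> - 1) * L) * exp L" by (rule exp_add)
        finally show ?thesis using Lexp by simp
      qed
      also have "4 * (real r * real n3 * b) / (exp ((\<beta> - 1) * L) * n) \<le> 4 * c / (3 * sqrt (real n3) * n)"
      proof -
        have sq: "sqrt (real n3) > 0" using n3p by simp
        have "4 * (real r * real n3 * b) * (3 * sqrt (real n3) * n) = 4 * n * (3 * real r * (real n3 * sqrt (real n3)) * b)"
          by (simp add: algebra_simps)
        also have "\<dots> \<le> 4 * n * (c * exp ((\<beta> - 1) * L))"
          using xle n2' by (intro mult_left_mono) auto
        also have "\<dots> = 4 * c * (exp ((\<beta> - 1) * L) * n)" by simp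
        finally show ?thesis using sq n2' by (simp add: divide_simps)
      qed
      finally show ?thesis .
    qed
    have qm0: "qm \<ge> 0" unfolding qm_def using th8 bp by simp
    have qmsq: "qm\<^sup>2 \<le> 16 * c\<^sup>2 / (9 * real n3 * n\<^sup>2)"
    proof -
      have "qm\<^sup>2 \<le> (4 * c / (3 * sqrt (real n3) * n))\<^sup>2" using qm_le qm0 by (intro power_mono) auto
      also have "\<dots> = 16 * c\<^sup>2 / (9 * real n3 * n\<^sup>2)" using n3p by (simp add: power_divide power_mult_distrib)
      finally show ?thesis .
    qed
    have qbound: "(tprod r n3 AQ BQ i j k - Xs i j k)\<^sup>2 \<le> 16 * c\<^sup>2 / (9 * real n3 * n\<^sup>2)"
      if "i < n1" "j < n2" "k < n3" for i j k
    proof -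
      have "\<bar>tprod r n3 AQ BQ i j k - Xs i j k\<bar> \<le> qm" using DQ that unfolding qm_def Xs_def by auto
      then have "(tprod r n3 AQ BQ i j k - Xs i j k)\<^sup>2 \<le> qm\<^sup>2" by (metis abs_le_square_iff abs_of_nonneg qm0)
      then show ?thesis using qmsq by linarith
    qed
    have s0: "s > 0" unfolding s_def using sg by (simp add: add_pos_nonneg)
    have den: "0 < 2 * (3 * \<sigma>\<^sup>2 + c\<^sup>2)" using sg by (simp add: add_pos_nonneg)
    have s12: "s \<le> 1/2" unfolding s_def pos_divide_le_eq[OF den] by simp
    have ssig: "s / \<sigma>\<^sup>2 \<le> 3 / (2 * c\<^sup>2)"
    proof -
      have "s = \<sigma>\<^sup>2 * (3 / (2 * (3 * \<sigma>\<^sup>2 + c\<^sup>2)))" unfolding s_def by simp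
      then have "s / \<sigma>\<^sup>2 = 3 / (2 * (3 * \<sigma>\<^sup>2 + c\<^sup>2))" using sg by simp
      also have "\<dots> \<le> 3 / (2 * c\<^sup>2)" using sg cp den by (intro divide_left_mono) (auto intro!: mult_pos_pos)
      finally show ?thesis .
    qed
    have s2sig: "s\<^sup>2 / \<sigma>\<^sup>2 \<le> 3 / (4 * c\<^sup>2)"
    proof -
      have "s\<^sup>2 / \<sigma>\<^sup>2 = s * (s / \<sigma>\<^sup>2)" by (simp add: power2_eq_square)
      also have "\<dots> \<le> (1/2) * (3 / (2 * c\<^sup>2))" using s0 s12 ssig by (intro mult_mono) auto
      finally show ?thesis by simp
    qed
    have slam: "s * lam = 2 * (\<beta> + 2) * L"
    proof -
      have k: "1 + 2 * \<kappa> / 3 = (3 * \<sigma>\<^sup>2 + c\<^sup>2) / (3 * \<sigma>\<^sup>2)" unfolding \<kappa>_def using sg by (simp add: field_simps)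
      have d2: "3 * \<sigma>\<^sup>2 + c\<^sup>2 > 0" using den by simp
      have "s * lam = (3 * \<sigma>\<^sup>2 / (2 * (3 * \<sigma>\<^sup>2 + c\<^sup>2))) * ((3 * \<sigma>\<^sup>2 + c\<^sup>2) / (3 * \<sigma>\<^sup>2)) * (4 * (\<beta> + 2) * L)"
        unfolding s_def lam_def k L_def by (simp only: mult.assoc mult.commute mult.left_commute)
      also have "(3 * \<sigma>\<^sup>2 / (2 * (3 * \<sigma>\<^sup>2 + c\<^sup>2))) * ((3 * \<sigma>\<^sup>2 + c\<^sup>2) / (3 * \<sigma>\<^sup>2)) = 1/2"
      proof -
        have gen: "x \<noteq> 0 \<Longrightarrow> D \<noteq> 0 \<Longrightarrow> x / (2 * D) * (D / x) = (1/2::real)" for x D by (simp add: field_simps)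
        show ?thesis using gen[of "3 * \<sigma>\<^sup>2" "3 * \<sigma>\<^sup>2 + c\<^sup>2"] sg d2 by simp
      qed
      finally show ?thesis by (simp add: algebra_simps)
    qed
    have lam0: "lam \<ge> 0" unfolding lam_def \<kappa>_def using b3 assms(1) by (intro mult_nonneg_nonneg) auto
    have g0: "\<gamma> > 0" unfolding \<gamma>_def using assms(1-3,11) by simp
    have mN: "real m \<le> N" unfolding N_def using assms(12) by (simp only: of_nat_le_iff)
    have gam: "\<gamma> = real m / N" unfolding \<gamma>_def N_def ..
    have g1: "\<gamma> \<le> 1" unfolding gam using mN Npos by simp
    have gN: "\<gamma> * N = real m" unfolding gam using Npos by simp
    have qv: "\<forall>i<n1. \<forall>j<n2. \<forall>k<n3. 3 * s\<^sup>2 * (tprod r n3 AQ BQ i j k - Xs i j k)\<^sup>2 / (2 * \<sigma>\<^sup>2) \<le> 1"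
    proof (intro allI impI)
      fix i j k assume ijk: "i < n1" "j < n2" "k < n3"
      have "3 * s\<^sup>2 * (tprod r n3 AQ BQ i j k - Xs i j k)\<^sup>2 / (2 * \<sigma>\<^sup>2) = (3/2) * (s\<^sup>2 / \<sigma>\<^sup>2) * (tprod r n3 AQ BQ i j k - Xs i j k)\<^sup>2"
        by simp
      also have "\<dots> \<le> (3/2) * (3 / (4 * c\<^sup>2)) * (16 * c\<^sup>2 / (9 * real n3 * n\<^sup>2))"
        using s2sig qbound[OF ijk] by (intro mult_mono) auto
      also have "\<dots> = 2 / (real n3 * n\<^sup>2)" using cp by (simp add: field_simps)
      also have "\<dots> \<le> 1"
      proof -
        have "1 * 4 \<le> real n3 * n\<^sup>2" using n3p n2' by (intro mult_mono) (auto simp: power2_eq_square intro: order.trans[OF _ mult_mono[of 2 n 2 n]])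
        then show ?thesis by simp
      qed
      finally show "3 * s\<^sup>2 * (tprod r n3 AQ BQ i j k - Xs i j k)\<^sup>2 / (2 * \<sigma>\<^sup>2) \<le> 1" .
    qed
    have Xsc: "\<forall>i<n1. \<forall>j<n2. \<forall>k<n3. 0 \<le> Xs i j k \<and> Xs i j k \<le> c"
      using assms(10) cp unfolding Xs_def by force
    define a where "a = \<gamma> * (1 - exp (- (s * c\<^sup>2 / (8 * \<sigma>\<^sup>2)))) / c\<^sup>2"
    define Q where "Q = (\<Sum>(i,j,k)\<in>index_set n1 n2 n3. (tprod r n3 AQ BQ i j k - Xs i j k)\<^sup>2)"
    define T where "T = real \<theta> ^ (n1 * r * n3) * exp (real (r * n2 * n3) * real \<theta> * exp (- (s * lam)) + 3 * \<gamma> * s\<^sup>2 * Q / \<sigma>\<^sup>2)"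
    define B0 where "B0 = ln T + 1 + s * (\<gamma> * Q / (2 * \<sigma>\<^sup>2) + lam * real (l0norm r n2 n3 BQ))"
    have th0: "\<theta> > 0" using th2 by simp
    have MB: "(\<integral>\<^sup>+ \<omega>. ennreal (F \<omega>) \<partial>sample_space n1 n2 n3 \<gamma>) \<le> ennreal (B0 / a)"
      unfolding F_def B0_def a_def Q_def T_def
      by (rule main_bound[OF n3p th0 sg cp g0 g1 s0 s12 lam0 Xsc fQ qv _ assms(19)])
         (use assms(18) in \<open>simp add: \<theta>_def\<close>)
    have Q0: "Q \<ge> 0" unfolding Q_def by (intro sum_nonneg) auto
    have Qb: "Q \<le> N * (16 * c\<^sup>2 / (9 * real n3 * n\<^sup>2))"
    proof -
      have "Q \<le> real (card (index_set n1 n2 n3)) * (16 * c\<^sup>2 / (9 * real n3 * n\<^sup>2))"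
        unfolding Q_def by (intro sum_bounded_above) (auto simp: index_set_def intro!: qbound)
      also have "real (card (index_set n1 n2 n3)) = N" unfolding N_def index_set_def by (simp add: card_cartesian_product)
      finally show ?thesis .
    qed
    have gQ: "\<gamma> * Q \<le> 16 * c\<^sup>2 / 9"
    proof -
      have "\<gamma> * Q \<le> \<gamma> * (N * (16 * c\<^sup>2 / (9 * real n3 * n\<^sup>2)))" using Qb g0 by (intro mult_left_mono) auto
      also have "\<dots> = real m * (16 * c\<^sup>2 / (9 * real n3 * n\<^sup>2))" using gN by (simp add: mult.assoc[symmetric])
      also have "\<dots> \<le> N * (16 * c\<^sup>2 / (9 * real n3 * n\<^sup>2))" using mN by (intro mult_right_mono) auto
      also have "\<dots> = (real n1 * real n2 / n\<^sup>2) * (16 * c\<^sup>2 / 9)" unfolding N_def using n3p n2' by (simp add: field_simps)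
      also have "\<dots> \<le> 1 * (16 * c\<^sup>2 / 9)"
      proof (intro mult_right_mono)
        have "real n1 * real n2 \<le> n * n" using n1n n2n by (intro mult_mono) auto
        then show "real n1 * real n2 / n\<^sup>2 \<le> 1" using n2' by (simp add: power2_eq_square)
      qed simp
      finally show ?thesis by simp
    qed
    have c_a: "3 * \<gamma> * s\<^sup>2 * Q / \<sigma>\<^sup>2 \<le> 4"
    proof -
      have "3 * \<gamma> * s\<^sup>2 * Q / \<sigma>\<^sup>2 = 3 * (s\<^sup>2 / \<sigma>\<^sup>2) * (\<gamma> * Q)" by simp
      also have "\<dots> \<le> 3 * (3 / (4 * c\<^sup>2)) * (16 * c\<^sup>2 / 9)" using s2sig gQ g0 Q0 by (intro mult_mono) auto
      also have "\<dots> = 4" using cp by (simp add: field_simps)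
      finally show ?thesis .
    qed
    have c_b: "s * (\<gamma> * Q / (2 * \<sigma>\<^sup>2)) \<le> 4/3"
    proof -
      have "s * (\<gamma> * Q / (2 * \<sigma>\<^sup>2)) = (1/2) * (s / \<sigma>\<^sup>2) * (\<gamma> * Q)" by simp
      also have "\<dots> \<le> (1/2) * (3 / (2 * c\<^sup>2)) * (16 * c\<^sup>2 / 9)" using ssig gQ g0 Q0 s0 by (intro mult_mono) auto
      also have "\<dots> = 4/3" using cp by (simp add: field_simps)
      finally show ?thesis .
    qed
    have K4: "K \<ge> 4"
    proof -
      have "1 * 2 * 2 \<le> real r * real n1 * real n3" using r1 assms(1,3) by (intro mult_mono) auto
      then show ?thesis unfolding K_def by simp
    qed
    have c_d: "real (r * n2 * n3) * real \<theta> * exp (- (s * lam)) \<le> K / 2"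
    proof -
      have "real \<theta> * exp (- (s * lam)) \<le> 2 * exp (\<beta> * L) * exp (- (2 * (\<beta> + 2) * L))"
        unfolding slam using thb(2) by (intro mult_right_mono) auto
      also have "\<dots> = 2 * exp (- ((\<beta> + 4) * L))" by (simp add: exp_add[symmetric] algebra_simps)
      finally have t1: "real \<theta> * exp (- (s * lam)) \<le> 2 * exp (- ((\<beta> + 4) * L))" .
      have "real n2 * (real \<theta> * exp (- (s * lam))) \<le> exp L * (2 * exp (- ((\<beta> + 4) * L)))"
      proof (rule mult_mono)
        show "real n2 \<le> exp L" using n2n Lexp by simp
      qed (use t1 in auto)
      also have "\<dots> = 2 * exp (- ((\<beta> + 3) * L))" by (simp add: exp_add[symmetric] algebra_simps)
      also have "\<dots> \<le> 2 * exp (- 4)"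
      proof -
        have "6 * (2/3) \<le> (\<beta> + 3) * L" by (rule mult_mono) (use b3 L23 in auto)
        then have "4 \<le> (\<beta> + 3) * L" by simp
        then show ?thesis by simp
      qed
      also have "\<dots> \<le> 1"
      proof -
        have "exp (4::real) \<ge> 2" using exp_ge_add_one_self[of 4] by simp
        then show ?thesis by (simp add: exp_minus field_simps)
      qed
      finally have t2: "real n2 * (real \<theta> * exp (- (s * lam))) \<le> 1" .
      have "real (r * n2 * n3) * real \<theta> * exp (- (s * lam)) = (real r * real n3) * (real n2 * (real \<theta> * exp (- (s * lam))))"
        by (simp add: algebra_simps)
      also have "\<dots> \<le> (real r * real n3) * (real n1 / 2)"
        using t2 assms(1) by (intro mult_left_mono) auto
      also have "\<dots> = K / 2" unfolding K_def by simp
      finally show ?thesis .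
    qed
    have lnT: "ln T = real (n1 * r * n3) * ln (real \<theta>) + real (r * n2 * n3) * real \<theta> * exp (- (s * lam)) + 3 * \<gamma> * s\<^sup>2 * Q / \<sigma>\<^sup>2"
      unfolding T_def using th0 by (simp add: ln_mult ln_realpow)
    have c_e: "real (n1 * r * n3) * ln (real \<theta>) \<le> K * (\<beta> * L + ln 2)"
    proof -
      have "(real r * real n1 * real n3) * ln (real \<theta>) \<le> (real r * real n1 * real n3) * (\<beta> * L + ln 2)"
        using thb(3) by (intro mult_left_mono) auto
      then show ?thesis unfolding K_def by (simp add: mult.commute mult.left_commute)
    qed
    have l0Q: "s * (lam * real (l0norm r n2 n3 BQ)) \<le> 2 * (\<beta> + 2) * L * l0"
    proof -
      have "s * (lam * real (l0norm r n2 n3 BQ)) = 2 * (\<beta> + 2) * L * real (l0norm r n2 n3 BQ)"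
        using slam by (simp add: mult.assoc[symmetric])
      also have "\<dots> \<le> 2 * (\<beta> + 2) * L * l0" unfolding l0_def using l0Q b3 L23 by (intro mult_left_mono) auto
      finally show ?thesis .
    qed
    have KL: "K * L \<ge> 8/3"
    proof -
      have "4 * (2/3) \<le> K * L" by (rule mult_mono) (use K4 L23 in auto)
      then show ?thesis by simp
    qed
    have B0b: "B0 \<le> 3 * (\<beta> + 2) * L * (K + l0)"
    proof -
      have h1: "B0 \<le> K * (\<beta> * L + ln 2) + K / 2 + 19/3 + 2 * (\<beta> + 2) * L * l0"
        unfolding B0_def lnT using c_e c_d c_a c_b l0Q by (simp add: algebra_simps)
      have h2: "K * (\<beta> * L + ln 2) \<le> K * (\<beta> * L + L)" using Lln2 K4 by (intro mult_left_mono) auto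
      have h3: "K / 2 \<le> K * L"
      proof -
        have "K * (1/2) \<le> K * L" using K4 L23 by (intro mult_left_mono) auto
        then show ?thesis by simp
      qed
      have h4: "19/3 \<le> 3 * (K * L)" using KL by simp
      have h5: "K * (\<beta> * L + L) + K * L + 3 * (K * L) + 2 * (\<beta> + 2) * L * l0 \<le> 3 * (\<beta> + 2) * L * (K + l0)"
      proof -
        have l00: "l0 \<ge> 0" unfolding l0_def by simp
        have "0 \<le> (2 * \<beta> + 1) * (K * L) + (\<beta> + 2) * L * l0" using b3 K4 L23 l00 by (intro add_nonneg_nonneg mult_nonneg_nonneg) auto
        then show ?thesis by (simp add: algebra_simps)
      qed
      show ?thesis using h1 h2 h3 h4 h5 by linarith
    qed
    have B00: "B0 \<ge> 0"
    proof -
      have lth: "ln (real \<theta>) \<ge> 0" using th8 by simp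
      show ?thesis unfolding B0_def lnT using Q0 g0 s0 lam0 lth
        by (intro add_nonneg_nonneg mult_nonneg_nonneg divide_nonneg_nonneg) auto
    qed
    define U where "U = s * c\<^sup>2 / (8 * \<sigma>\<^sup>2)"
    have U0: "U > 0" unfolding U_def using s0 cp sg by simp
    have aN: "a * N = real m * (1 - exp (- U)) / c\<^sup>2" unfolding a_def U_def using gN by (simp add: field_simps)
    have eU: "1 - exp (- U) \<ge> U / (1 + U)"
    proof -
      have "1 + U \<le> exp U" by (rule exp_ge_add_one_self)
      then have "exp (- U) \<le> 1 / (1 + U)" using U0 by (simp add: exp_minus field_simps)
      moreover have "1 - 1 / (1 + U) = U / (1 + U)" using U0 by (simp add: field_simps)
      ultimately show ?thesis by linarith
    qed
    have eUpos: "1 - exp (- U) > 0"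
    proof -
      have "U / (1 + U) > 0" using U0 by simp
      then show ?thesis using eU by linarith
    qed
    have cU: "c\<^sup>2 / (1 - exp (- U)) \<le> 16 * \<sigma>\<^sup>2 + 7 * c\<^sup>2"
    proof -
      have pos: "U / (1 + U) > 0" using U0 by simp
      have "c\<^sup>2 / (1 - exp (- U)) \<le> c\<^sup>2 / (U / (1 + U))" using eU pos cp eUpos by (intro divide_left_mono mult_pos_pos) auto
      also have "\<dots> = c\<^sup>2 / U + c\<^sup>2" using U0 by (simp add: field_simps)
      also have "c\<^sup>2 / U = 16 * \<sigma>\<^sup>2 + 16 * c\<^sup>2 / 3"
        unfolding U_def s_def using sg cp by (simp add: field_simps)
      finally show ?thesis using zero_le_power2[of c] by linarith
    qed
    have mpos: "real m > 0" using assms(11) by simp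
    have final_real: "B0 / (a * N) \<le> 22 * c\<^sup>2 * ln (real m) / real m
              + 16 * (3 * \<sigma>\<^sup>2 + 2 * c\<^sup>2) * (\<beta> + 2)
                * ((real r * real n1 * real n3 + real (l0norm r n2 n3 Bs)) / real m)
                * ln (real (max n1 n2))"
    proof -
      have "B0 / (a * N) = B0 * (c\<^sup>2 / (1 - exp (- U))) / real m" unfolding aN using cp eUpos mpos by (simp add: field_simps)
      also have "\<dots> \<le> (3 * (\<beta> + 2) * L * (K + l0)) * (16 * \<sigma>\<^sup>2 + 7 * c\<^sup>2) / real m"
        using B0b cU B00 mpos cp eUpos by (intro divide_right_mono mult_mono) auto
      also have "\<dots> \<le> 16 * (3 * \<sigma>\<^sup>2 + 2 * c\<^sup>2) * (\<beta> + 2) * ((K + l0) / real m) * L"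
      proof -
        have l00: "l0 \<ge> 0" unfolding l0_def by simp
        have X: "0 \<le> (\<beta> + 2) * L * (K + l0)" using b3 L23 K4 l00 by simp
        have "(3 * (\<beta> + 2) * L * (K + l0)) * (16 * \<sigma>\<^sup>2 + 7 * c\<^sup>2) \<le> ((\<beta> + 2) * L * (K + l0)) * (16 * (3 * \<sigma>\<^sup>2 + 2 * c\<^sup>2))"
        proof -
          have "3 * (16 * \<sigma>\<^sup>2 + 7 * c\<^sup>2) \<le> 16 * (3 * \<sigma>\<^sup>2 + 2 * c\<^sup>2)" by simp
          from mult_left_mono[OF this X] show ?thesis by (simp add: algebra_simps)
        qed
        then have "(3 * (\<beta> + 2) * L * (K + l0)) * (16 * \<sigma>\<^sup>2 + 7 * c\<^sup>2) / real m \<le> ((\<beta> + 2) * L * (K + l0)) * (16 * (3 * \<sigma>\<^sup>2 + 2 * c\<^sup>2)) / real m"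
          using mpos by (intro divide_right_mono) auto
        also have "\<dots> = 16 * (3 * \<sigma>\<^sup>2 + 2 * c\<^sup>2) * (\<beta> + 2) * ((K + l0) / real m) * L"
          using mpos by (simp add: field_simps)
        finally show ?thesis .
      qed
      also have "\<dots> \<le> 22 * c\<^sup>2 * ln (real m) / real m + 16 * (3 * \<sigma>\<^sup>2 + 2 * c\<^sup>2) * (\<beta> + 2) * ((K + l0) / real m) * L"
        using assms(11) mpos by simp
      finally show ?thesis unfolding K_def l0_def L_def .
    qed
    have "(\<integral>\<^sup>+ \<omega>. ennreal (F \<omega> / real (n1 * n2 * n3)) \<partial>sample_space n1 n2 n3 \<gamma>) \<le> ennreal (1 / N) * ennreal (B0 / a)"
      unfolding LHS_eq using MB by (intro mult_left_mono) auto
    also have "\<dots> = ennreal (B0 / (a * N))"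
    proof -
      have apos: "a > 0" using g0 eUpos cp unfolding a_def U_def by simp
      have "ennreal (1 / N) * ennreal (B0 / a) = ennreal (1 / N * (B0 / a))"
        using Npos apos B00 by (intro ennreal_mult[symmetric]) auto
      also have "1 / N * (B0 / a) = B0 / (a * N)" by simp
      finally show ?thesis .
    qed
    also have "\<dots> \<le> ennreal (22 * c\<^sup>2 * ln (real m) / real m
              + 16 * (3 * \<sigma>\<^sup>2 + 2 * c\<^sup>2) * (\<beta> + 2)
                * ((real r * real n1 * real n3 + real (l0norm r n2 n3 Bs)) / real m)
                * ln (real (max n1 n2)))"
      using final_real by (rule ennreal_leI)
    finally show ?thesis unfolding F_def .
  qed
qed

end
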